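(* Let $X$ be a well-ordered set, $S\subseteq GDNP(X)$, and suppose the GDN-Poisson algebra $GDNP(X|S)=GDNP(X)/Id(S)$ satisfies the identity $x\circ(y\cdot z)=(x\circ y)\cdot z+(x\circ z)\cdot y$. Let $\theta:DGDNP(X)\to k\{X\}$ be the GDN-Poisson algebra homomorphism induced by $\theta(a)=a$, $a\in X$ (with $S$ mapped to $DGDNP(X)$ via the canonical projection). Then $GDNP(X|S)$ is isomorphic to $k\{X|\theta(S)\}$ both as GDN-Poisson algebras (with $f\circ g=fDg$ on $k\{X|\theta(S)\}$) and as commutative associative differential algebras (with derivation $f\mapsto e\circ f$ on $GDNP(X|S)$).
   Context: A GDN-Poisson algebra is a vector space with bilinear products $\cdot,\circ$ such that $(\cdot)$ is commutative associative with unit $e$, $x\circ(y\circ z)-(x\circ y)\circ z=y\circ(x\circ z)-(y\circ x)\circ z$, $(x\circ y)\circ z=(x\circ z)\circ y$, $(x\cdot y)\circ z=x\cdot(y\circ z)$, $(x\circ y)\cdot z-x\circ(y\cdot z)=(y\circ x)\cdot z-y\circ(x\cdot z)$. $GDNP(X)$ is the free GDN-Poisson algebra on $X$ and $Id(S)$ its ideal generated by $S$. $DGDNP(X)=GDNP(X)/Id(\lozenge)$ is the free GDN-Poisson algebra satisfying $x\circ(y\cdot z)=(x\circ y)\cdot z+(x\circ z)\cdot y$. $k\{X\}$ is the free commutative associative differential algebra over the field $k$ on $X$, with unit $e$ and one derivation $D$ ($De=0$); for $R\subseteq k\{X\}$, $k\{X|R\}$ is the quotient of $k\{X\}$ by the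 differential ideal generated by $R$. *)

theory Defs
  imports Main
begin

text \<open>One record type serves both for GDN-Poisson algebras (fields dt = \<cdot>, cc = \<circ>,
  un = e) and for commutative associative differential algebras (dt = product,
  un = e, dr = derivation D).  Fields irrelevant to a given kind of structure are
  simply ignored by the corresponding notions below.\<close>

record ('k, 'a) alg =
  car :: "'a set"
  pl  :: "'a \<Rightarrow> 'a \<Rightarrow> 'a"
  zr  :: "'a"
  sm  :: "'k \<Rightarrow> 'a \<Rightarrow> 'a"
  dt  :: "'a \<Rightarrow> 'a \<Rightarrow> 'a"
  cc  :: "'a \<Rightarrow> 'a \<Rightarrow> 'a"
  un  :: "'a"
  dr  :: "'a \<Rightarrow> 'a"

definition sub :: "('k::field, 'a) alg \<Rightarrow> 'a \<Rightarrow> 'a \<Rightarrow> 'a" where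
  "sub A a b = pl A a (sm A (-1) b)"

inductive_set gdnp_ideal :: "('k::field, 'a) alg \<Rightarrow> 'a set \<Rightarrow> 'a set"
  for A :: "('k, 'a) alg" and S :: "'a set" where
  gen: "s \<in> S \<Longrightarrow> s \<in> car A \<Longrightarrow> s \<in> gdnp_ideal A S"
| zero: "zr A \<in> gdnp_ideal A S"
| add: "a \<in> gdnp_ideal A S \<Longrightarrow> b \<in> gdnp_ideal A S \<Longrightarrow> pl A a b \<in> gdnp_ideal A S"
| smul: "a \<in> gdnp_ideal A S \<Longrightarrow> sm A c a \<in> gdnp_ideal A S"
| dotl: "a \<in> gdnp_ideal A S \<Longrightarrow> u \<in> car A \<Longrightarrow> dt A u a \<in> gdnp_ideal A S"
| dotr: "a \<in> gdnp_ideal A S \<Longrightarrow> u \<in> car A \<Longrightarrow> dt A a u \<in> gdnp_ideal A S"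
| circl: "a \<in> gdnp_ideal A S \<Longrightarrow> u \<in> car A \<Longrightarrow> cc A u a \<in> gdnp_ideal A S"
| circr: "a \<in> gdnp_ideal A S \<Longrightarrow> u \<in> car A \<Longrightarrow> cc A a u \<in> gdnp_ideal A S"

inductive_set diff_ideal :: "('k::field, 'a) alg \<Rightarrow> 'a set \<Rightarrow> 'a set"
  for A :: "('k, 'a) alg" and S :: "'a set" where
  gen: "s \<in> S \<Longrightarrow> s \<in> car A \<Longrightarrow> s \<in> diff_ideal A S"
| zero: "zr A \<in> diff_ideal A S"
| add: "a \<in> diff_ideal A S \<Longrightarrow> b \<in> diff_ideal A S \<Longrightarrow> pl A a b \<in> diff_ideal A S"
| smul: "a \<in> diff_ideal A S \<Longrightarrow> sm A c a \<in> diff_ideal A S"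
| dotl: "a \<in> diff_ideal A S \<Longrightarrow> u \<in> car A \<Longrightarrow> dt A u a \<in> diff_ideal A S"
| dotr: "a \<in> diff_ideal A S \<Longrightarrow> u \<in> car A \<Longrightarrow> dt A a u \<in> diff_ideal A S"
| der: "a \<in> diff_ideal A S \<Longrightarrow> dr A a \<in> diff_ideal A S"

definition cos :: "('k::field, 'a) alg \<Rightarrow> 'a set \<Rightarrow> 'a \<Rightarrow> 'a set" where
  "cos A I a = {b \<in> car A. sub A b a \<in> I}"

definition rep :: "'a set \<Rightarrow> 'a" where
  "rep U = (SOME a. a \<in> U)"

definition quot :: "('k::field, 'a) alg \<Rightarrow> 'a set \<Rightarrow> ('k, 'a set) alg" where
  "quot A I = \<lparr> car = cos A I ` car A,
                pl = (\<lambda>U V. cos A I (pl A (rep U) (rep V))),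
                zr = cos A I (zr A),
                sm = (\<lambda>c U. cos A I (sm A c (rep U))),
                dt = (\<lambda>U V. cos A I (dt A (rep U) (rep V))),
                cc = (\<lambda>U V. cos A I (cc A (rep U) (rep V))),
                un = cos A I (un A),
                dr = (\<lambda>U. cos A I (dr A (rep U))) \<rparr>"

definition lin_hom :: "('k::field, 'a) alg \<Rightarrow> ('k, 'b) alg \<Rightarrow> ('a \<Rightarrow> 'b) \<Rightarrow> bool" where
  "lin_hom A B h \<longleftrightarrow> (\<forall>a\<in>car A. h a \<in> car B)
     \<and> (\<forall>a\<in>car A. \<forall>b\<in>car A. h (pl A a b) = pl B (h a) (h b))
     \<and> (\<forall>c. \<forall>a\<in>car A. h (sm A c a) = sm B c (h a))"

definition gdnp_hom :: "('k::field, 'a) alg \<Rightarrow> ('k, 'b) alg \<Rightarrow> ('a \<Rightarrow> 'b) \<Rightarrow> bool" where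
  "gdnp_hom A B h \<longleftrightarrow> lin_hom A B h
     \<and> (\<forall>a\<in>car A. \<forall>b\<in>car A. h (dt A a b) = dt B (h a) (h b))
     \<and> (\<forall>a\<in>car A. \<forall>b\<in>car A. h (cc A a b) = cc B (h a) (h b))
     \<and> h (un A) = un B"

definition diff_hom :: "('k::field, 'a) alg \<Rightarrow> ('k, 'b) alg \<Rightarrow> ('a \<Rightarrow> 'b) \<Rightarrow> bool" where
  "diff_hom A B h \<longleftrightarrow> lin_hom A B h
     \<and> (\<forall>a\<in>car A. \<forall>b\<in>car A. h (dt A a b) = dt B (h a) (h b))
     \<and> (\<forall>a\<in>car A. h (dr A a) = dr B (h a))
     \<and> h (un A) = un B"

definition gdnp_as_diff :: "('k, 'a) alg \<Rightarrow> ('k, 'a) alg" where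
  "gdnp_as_diff A = A\<lparr>dr := (\<lambda>f. cc A (un A) f)\<rparr>"

datatype 'x bterm = BV 'x | BE | BDot "'x bterm" "'x bterm" | BCirc "'x bterm" "'x bterm"

text \<open>Its algebra: finitely supported k-linear combinations of terms,
  products extended bilinearly.\<close>
definition bimag :: "('k::field, 'x bterm \<Rightarrow> 'k) alg" where
  "bimag = \<lparr> car = {f. finite {t. f t \<noteq> 0}},
             pl = (\<lambda>f g t. f t + g t),
             zr = (\<lambda>t. 0),
             sm = (\<lambda>c f t. c * f t),
             dt = (\<lambda>f g t. case t of BDot a b \<Rightarrow> f a * g b | _ \<Rightarrow> 0),
             cc = (\<lambda>f g t. case t of BCirc a b \<Rightarrow> f a * g b | _ \<Rightarrow> 0),
             un = (\<lambda>t. if t = BE then 1 else 0),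
             dr = (\<lambda>f. f) \<rparr>"

text \<open>All instances of the defining identities of GDN-Poisson algebras.\<close>
definition gdnp_rels :: "('k::field, 'x bterm \<Rightarrow> 'k) alg \<Rightarrow> ('x bterm \<Rightarrow> 'k) set" where
  "gdnp_rels M = (\<Union>u\<in>car M. \<Union>v\<in>car M. \<Union>w\<in>car M.
     { sub M (dt M u v) (dt M v u),
       sub M (dt M (dt M u v) w) (dt M u (dt M v w)),
       sub M (dt M (un M) u) u,
       sub M (sub M (cc M u (cc M v w)) (cc M (cc M u v) w))
             (sub M (cc M v (cc M u w)) (cc M (cc M v u) w)),
       sub M (cc M (cc M u v) w) (cc M (cc M u w) v),
       sub M (cc M (dt M u v) w) (dt M u (cc M v w)),
       sub M (sub M (dt M (cc M u v) w) (cc M u (dt M v w)))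
             (sub M (dt M (cc M v u) w) (cc M v (dt M u w))) })"

definition GDNP :: "('k::field, ('x bterm \<Rightarrow> 'k) set) alg" where
  "GDNP = quot bimag (gdnp_ideal bimag (gdnp_rels bimag))"

definition gdnp_gen :: "'x \<Rightarrow> ('x bterm \<Rightarrow> 'k::field) set" where
  "gdnp_gen x = cos bimag (gdnp_ideal bimag (gdnp_rels bimag)) (\<lambda>t. if t = BV x then 1 else 0)"

definition GDNPq :: "('x bterm \<Rightarrow> 'k::field) set set \<Rightarrow> ('k, ('x bterm \<Rightarrow> 'k) set set) alg" where
  "GDNPq S = quot GDNP (gdnp_ideal GDNP S)"

definition lozenge :: "('k::field, 'a) alg \<Rightarrow> 'a set" where
  "lozenge A = {sub A (cc A x (dt A y z)) (pl A (dt A (cc A x y) z) (dt A (cc A x z) y)) | x y z.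
                 x \<in> car A \<and> y \<in> car A \<and> z \<in> car A}"

definition DGDNP :: "('k::field, ('x bterm \<Rightarrow> 'k) set set) alg" where
  "DGDNP = quot GDNP (gdnp_ideal GDNP (lozenge GDNP))"

definition dproj :: "('x bterm \<Rightarrow> 'k::field) set \<Rightarrow> ('x bterm \<Rightarrow> 'k) set set" where
  "dproj a = cos GDNP (gdnp_ideal GDNP (lozenge GDNP)) a"

definition dgen :: "'x \<Rightarrow> ('x bterm \<Rightarrow> 'k::field) set set" where
  "dgen x = dproj (gdnp_gen x)"

datatype 'x dterm = DV 'x | DE | DMul "'x dterm" "'x dterm" | DDer "'x dterm"

text \<open>Free algebra with one bilinear product and one linear operator; the field cc
  is the GDN-Poisson product f \<circ> g = f D g.\<close>
definition dmag :: "('k::field, 'x dterm \<Rightarrow> 'k) alg" where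
  "dmag = \<lparr> car = {f. finite {t. f t \<noteq> 0}},
            pl = (\<lambda>f g t. f t + g t),
            zr = (\<lambda>t. 0),
            sm = (\<lambda>c f t. c * f t),
            dt = (\<lambda>f g t. case t of DMul a b \<Rightarrow> f a * g b | _ \<Rightarrow> 0),
            cc = (\<lambda>f g t. case t of DMul a b \<Rightarrow> f a * (case b of DDer b' \<Rightarrow> g b' | _ \<Rightarrow> 0) | _ \<Rightarrow> 0),
            un = (\<lambda>t. if t = DE then 1 else 0),
            dr = (\<lambda>f t. case t of DDer a \<Rightarrow> f a | _ \<Rightarrow> 0) \<rparr>"

definition diff_rels :: "('k::field, 'x dterm \<Rightarrow> 'k) alg \<Rightarrow> ('x dterm \<Rightarrow> 'k) set" where
  "diff_rels M = (\<Union>u\<in>car M. \<Union>v\<in>car M. \<Union>w\<in>car M.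
     { sub M (dt M u v) (dt M v u),
       sub M (dt M (dt M u v) w) (dt M u (dt M v w)),
       sub M (dt M (un M) u) u,
       sub M (dr M (dt M u v)) (pl M (dt M (dr M u) v) (dt M u (dr M v))),
       dr M (un M) })"

definition kX :: "('k::field, ('x dterm \<Rightarrow> 'k) set) alg" where
  "kX = quot dmag (diff_ideal dmag (diff_rels dmag))"

definition kgen :: "'x \<Rightarrow> ('x dterm \<Rightarrow> 'k::field) set" where
  "kgen x = cos dmag (diff_ideal dmag (diff_rels dmag)) (\<lambda>t. if t = DV x then 1 else 0)"

definition kXR :: "('x dterm \<Rightarrow> 'k::field) set set \<Rightarrow> ('k, ('x dterm \<Rightarrow> 'k) set set) alg" where
  "kXR R = quot kX (diff_ideal kX R)"

end

theory Submission
  imports Defs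
begin


locale lin_ok = fixes A :: "('k::field, 'a) alg"
  assumes c_zr: "zr A \<in> car A" and c_un: "un A \<in> car A"
  and c_pl: "a\<in>car A \<Longrightarrow> b\<in>car A \<Longrightarrow> pl A a b \<in> car A"
  and c_dt: "a\<in>car A \<Longrightarrow> b\<in>car A \<Longrightarrow> dt A a b \<in> car A"
  and c_cc: "a\<in>car A \<Longrightarrow> b\<in>car A \<Longrightarrow> cc A a b \<in> car A"
  and c_sm: "a\<in>car A \<Longrightarrow> sm A r a \<in> car A"
  and c_dr: "a\<in>car A \<Longrightarrow> dr A a \<in> car A"
  and e_refl: "a\<in>car A \<Longrightarrow> sub A a a = zr A"
  and e_sym: "a\<in>car A \<Longrightarrow> b\<in>car A \<Longrightarrow> sub A b a = sm A (-1) (sub A a b)"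
  and e_trans: "a\<in>car A \<Longrightarrow> b\<in>car A \<Longrightarrow> c\<in>car A \<Longrightarrow> sub A a c = pl A (sub A a b) (sub A b c)"
  and e_pl: "a\<in>car A \<Longrightarrow> b\<in>car A \<Longrightarrow> a'\<in>car A \<Longrightarrow> b'\<in>car A \<Longrightarrow> sub A (pl A a' b') (pl A a b) = pl A (sub A a' a) (sub A b' b)"
  and e_sm: "a\<in>car A \<Longrightarrow> a'\<in>car A \<Longrightarrow> sub A (sm A r a') (sm A r a) = sm A r (sub A a' a)"
  and e_dt: "a\<in>car A \<Longrightarrow> b\<in>car A \<Longrightarrow> a'\<in>car A \<Longrightarrow> b'\<in>car A \<Longrightarrow> sub A (dt A a' b') (dt A a b) = pl A (dt A (sub A a' a) b') (dt A a (sub A b' b))"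
  and e_cc: "a\<in>car A \<Longrightarrow> b\<in>car A \<Longrightarrow> a'\<in>car A \<Longrightarrow> b'\<in>car A \<Longrightarrow> sub A (cc A a' b') (cc A a b) = pl A (cc A (sub A a' a) b') (cc A a (sub A b' b))"
  and e_dr: "a\<in>car A \<Longrightarrow> a'\<in>car A \<Longrightarrow> sub A (dr A a') (dr A a) = dr A (sub A a' a)"
  and e_decomp: "a\<in>car A \<Longrightarrow> b\<in>car A \<Longrightarrow> a = pl A b (sub A a b)"
  and e_plz: "a\<in>car A \<Longrightarrow> pl A a (zr A) = a"
  and e_smz: "sm A r (zr A) = zr A" and e_sm0: "a\<in>car A \<Longrightarrow> sm A 0 a = zr A"
  and e_dtz1: "a\<in>car A \<Longrightarrow> dt A a (zr A) = zr A" and e_dtz2: "a\<in>car A \<Longrightarrow> dt A (zr A) a = zr A"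
  and e_ccz1: "a\<in>car A \<Longrightarrow> cc A a (zr A) = zr A" and e_ccz2: "a\<in>car A \<Longrightarrow> cc A (zr A) a = zr A"
  and e_drz: "dr A (zr A) = zr A"
  and e_plsub: "a\<in>car A \<Longrightarrow> b\<in>car A \<Longrightarrow> sub A (pl A a b) b = a"
  and e_subz: "a\<in>car A \<Longrightarrow> sub A a (zr A) = a"
begin
lemma c_sub: "a\<in>car A \<Longrightarrow> b\<in>car A \<Longrightarrow> sub A a b \<in> car A"
  unfolding sub_def by (simp add: c_pl c_sm)
end

definition pres :: "('k::field, 'a) alg \<Rightarrow> ('k, 'b) alg \<Rightarrow> ('a \<Rightarrow> 'b) \<Rightarrow> bool" where
"pres A B h \<longleftrightarrow> (\<forall>a\<in>car A. h a \<in> car B) \<and> h (zr A) = zr B \<and> h (un A) = un B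
  \<and> (\<forall>a\<in>car A. \<forall>b\<in>car A. h (pl A a b) = pl B (h a) (h b) \<and> h (dt A a b) = dt B (h a) (h b))
  \<and> (\<forall>a\<in>car A. \<forall>c. h (sm A c a) = sm B c (h a))"

definition pres_cc :: "('k::field, 'a) alg \<Rightarrow> ('k, 'b) alg \<Rightarrow> ('a \<Rightarrow> 'b) \<Rightarrow> bool" where
"pres_cc A B h \<longleftrightarrow> (\<forall>a\<in>car A. \<forall>b\<in>car A. h (cc A a b) = cc B (h a) (h b))"

definition pres_dr :: "('k::field, 'a) alg \<Rightarrow> ('b \<Rightarrow> 'b) \<Rightarrow> ('a \<Rightarrow> 'b) \<Rightarrow> bool" where
"pres_dr A D h \<longleftrightarrow> (\<forall>a\<in>car A. h (dr A a) = D (h a))"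

lemma presD:
  assumes "pres A B h"
  shows "a\<in>car A \<Longrightarrow> h a \<in> car B" "h (zr A) = zr B" "h (un A) = un B"
   "a\<in>car A \<Longrightarrow> b\<in>car A \<Longrightarrow> h (pl A a b) = pl B (h a) (h b)"
   "a\<in>car A \<Longrightarrow> b\<in>car A \<Longrightarrow> h (dt A a b) = dt B (h a) (h b)"
   "a\<in>car A \<Longrightarrow> h (sm A c a) = sm B c (h a)"
  using assms unfolding pres_def by auto

lemma pres_sub: "pres A B h \<Longrightarrow> lin_ok A \<Longrightarrow> a\<in>car A \<Longrightarrow> b\<in>car A \<Longrightarrow> h (sub A a b) = sub B (h a) (h b)"
  unfolding sub_def by (simp add: presD(4,6) lin_ok.c_sm)

lemma pres_comp: "pres A B h \<Longrightarrow> pres B C g \<Longrightarrow> pres A C (g \<circ> h)"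
  unfolding pres_def by auto
lemma pres_cc_comp: "pres A B h \<Longrightarrow> pres_cc A B h \<Longrightarrow> pres_cc B C g \<Longrightarrow> pres_cc A C (g \<circ> h)"
  unfolding pres_def pres_cc_def by auto


lemma lin_transfer:
  assumes LA: "lin_ok A" and P: "pres A B h" and PC: "pres_cc A B h" and PD: "pres_dr A (dr B) h"
    and S: "h ` car A = car B"
  shows "lin_ok B"
proof -
  interpret A: lin_ok A by fact
  have F: "\<And>a b. a\<in>car A \<Longrightarrow> b\<in>car A \<Longrightarrow> pl B (h a) (h b) = h (pl A a b)"
    "\<And>a b. a\<in>car A \<Longrightarrow> b\<in>car A \<Longrightarrow> dt B (h a) (h b) = h (dt A a b)"
    "\<And>a b. a\<in>car A \<Longrightarrow> b\<in>car A \<Longrightarrow> cc B (h a) (h b) = h (cc A a b)"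
    "\<And>a b. a\<in>car A \<Longrightarrow> b\<in>car A \<Longrightarrow> sub B (h a) (h b) = h (sub A a b)"
    "\<And>a c. a\<in>car A \<Longrightarrow> sm B c (h a) = h (sm A c a)"
    "\<And>a. a\<in>car A \<Longrightarrow> dr B (h a) = h (dr A a)"
    "zr B = h (zr A)" "un B = h (un A)"
    using P PC PD LA by (auto simp: presD pres_sub pres_cc_def pres_dr_def)
  note X = A.c_zr A.c_un A.c_pl A.c_dt A.c_cc A.c_sm A.c_dr A.c_sub
  show ?thesis
    apply unfold_locales
    apply (simp_all only: S[symmetric])
    apply (clarsimp simp: F X)
    apply (clarsimp simp: F X)
    apply (clarsimp simp: F X)
    apply (clarsimp simp: F X)
    apply (clarsimp simp: F X)
    apply (clarsimp simp: F X)
    apply (clarsimp simp: F X)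
    apply (clarsimp simp: F X, metis A.e_refl X)
    apply (clarsimp simp: F X, metis A.e_sym X)
    apply (clarsimp simp: F X, metis A.e_trans X)
    apply (clarsimp simp: F X, metis A.e_pl X)
    apply (clarsimp simp: F X, metis A.e_sm X)
    apply (clarsimp simp: F X, metis A.e_dt X)
    apply (clarsimp simp: F X, metis A.e_cc X)
    apply (clarsimp simp: F X, metis A.e_dr X)
    apply (clarsimp simp: F X, metis A.e_decomp X)
    apply (clarsimp simp: F X, metis A.e_plz X)
    apply (clarsimp simp: F X, metis A.e_smz X)
    apply (clarsimp simp: F X, metis A.e_sm0 X)
    apply (clarsimp simp: F X, metis A.e_dtz1 X)
    apply (clarsimp simp: F X, metis A.e_dtz2 X)
    apply (clarsimp simp: F X, metis A.e_ccz1 X)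
    apply (clarsimp simp: F X, metis A.e_ccz2 X)
    apply (clarsimp simp: F X, metis A.e_drz X)
    apply (clarsimp simp: F X, metis A.e_plsub X)
    apply (clarsimp simp: F X, metis A.e_subz X)
    done
qed


definition ideal_ok :: "('k::field, 'a) alg \<Rightarrow> 'a set \<Rightarrow> bool" where
"ideal_ok A I \<longleftrightarrow> I \<subseteq> car A \<and> zr A \<in> I \<and> (\<forall>a\<in>I. \<forall>b\<in>I. pl A a b \<in> I) \<and> (\<forall>a\<in>I. \<forall>c. sm A c a \<in> I)
  \<and> (\<forall>a\<in>I. \<forall>u\<in>car A. dt A u a \<in> I \<and> dt A a u \<in> I \<and> cc A u a \<in> I \<and> cc A a u \<in> I)
  \<and> (\<forall>a\<in>I. dr A a \<in> I)"

definition ind :: "('a \<Rightarrow> 'b) \<Rightarrow> 'a set \<Rightarrow> 'b" where "ind h U = h (rep U)"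

context fixes A :: "('k::field, 'a) alg" and I assumes L: "lin_ok A" and Id: "ideal_ok A I"
begin
interpretation A: lin_ok A by (rule L)
lemma I_car: "a \<in> I \<Longrightarrow> a \<in> car A" using Id unfolding ideal_ok_def by auto
lemma I_cl: "zr A \<in> I" "a\<in>I \<Longrightarrow> b\<in>I \<Longrightarrow> pl A a b \<in> I" "a\<in>I \<Longrightarrow> sm A c a \<in> I"
  "a\<in>I \<Longrightarrow> u\<in>car A \<Longrightarrow> dt A u a \<in> I" "a\<in>I \<Longrightarrow> u\<in>car A \<Longrightarrow> dt A a u \<in> I"
  "a\<in>I \<Longrightarrow> u\<in>car A \<Longrightarrow> cc A u a \<in> I" "a\<in>I \<Longrightarrow> u\<in>car A \<Longrightarrow> cc A a u \<in> I"
  "a\<in>I \<Longrightarrow> dr A a \<in> I"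
  using Id unfolding ideal_ok_def by auto

lemma sub_sym_I: "a\<in>car A \<Longrightarrow> b\<in>car A \<Longrightarrow> sub A a b \<in> I \<Longrightarrow> sub A b a \<in> I"
  by (metis A.e_sym I_cl(3))
lemma sub_trans_I: "a\<in>car A \<Longrightarrow> b\<in>car A \<Longrightarrow> c\<in>car A \<Longrightarrow> sub A a b \<in> I \<Longrightarrow> sub A b c \<in> I \<Longrightarrow> sub A a c \<in> I"
  by (metis A.e_trans I_cl(2))

lemma cos_eq: "a\<in>car A \<Longrightarrow> b\<in>car A \<Longrightarrow> cos A I a = cos A I b \<longleftrightarrow> sub A a b \<in> I"
proof
  assume a: "a\<in>car A" and b: "b\<in>car A"
  { assume "cos A I a = cos A I b"
    moreover have "a \<in> cos A I a" using a by (simp add: cos_def A.e_refl I_cl(1))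
    ultimately show "sub A a b \<in> I" by (simp add: cos_def) }
  { assume h: "sub A a b \<in> I"
    have "sub A b a \<in> I" using sub_sym_I[OF a b h] .
    show "cos A I a = cos A I b" unfolding cos_def
    proof (intro Collect_cong conj_cong refl)
      fix x assume x: "x \<in> car A"
      show "sub A x a \<in> I \<longleftrightarrow> sub A x b \<in> I"
        using sub_trans_I[OF x a b _ h] sub_trans_I[OF x b a _ \<open>sub A b a \<in> I\<close>] by blast
    qed }
qed

lemma rep_cos: assumes "a\<in>car A" shows "rep (cos A I a) \<in> car A" "sub A (rep (cos A I a)) a \<in> I"
proof -
  have "a \<in> cos A I a" using assms by (simp add: cos_def A.e_refl I_cl(1))
  hence "rep (cos A I a) \<in> cos A I a" unfolding rep_def by (rule someI)
  thus "rep (cos A I a) \<in> car A" "sub A (rep (cos A I a)) a \<in> I" by (auto simp: cos_def)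
qed

lemma cos_rep: assumes "a\<in>car A" shows "cos A I (rep (cos A I a)) = cos A I a"
  using rep_cos[OF assms] assms cos_eq by blast

lemma quot_car: "car (quot A I) = cos A I ` car A" by (simp add: quot_def)

lemma quot_pres: "pres A (quot A I) (cos A I)" and quot_pres_cc: "pres_cc A (quot A I) (cos A I)"
  and quot_pres_dr: "pres_dr A (dr (quot A I)) (cos A I)"
proof -
  have Q: "quot A I = \<lparr> car = cos A I ` car A,
                pl = (\<lambda>U V. cos A I (pl A (rep U) (rep V))),
                zr = cos A I (zr A),
                sm = (\<lambda>c U. cos A I (sm A c (rep U))),
                dt = (\<lambda>U V. cos A I (dt A (rep U) (rep V))),
                cc = (\<lambda>U V. cos A I (cc A (rep U) (rep V))),
                un = cos A I (un A),
                dr = (\<lambda>U. cos A I (dr A (rep U))) \<rparr>" by (simp add: quot_def)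
  have P2: "cos A I (pl A a b) = pl (quot A I) (cos A I a) (cos A I b)"
       "cos A I (dt A a b) = dt (quot A I) (cos A I a) (cos A I b)"
       "cos A I (cc A a b) = cc (quot A I) (cos A I a) (cos A I b)"
    if a: "a\<in>car A" and b: "b\<in>car A" for a b
  proof -
    let ?a = "rep (cos A I a)" and ?b = "rep (cos A I b)"
    have ra: "?a \<in> car A" "sub A ?a a \<in> I" and rb: "?b \<in> car A" "sub A ?b b \<in> I"
      using rep_cos a b by auto
    have "sub A (pl A ?a ?b) (pl A a b) \<in> I" using A.e_pl[OF a b ra(1) rb(1)] I_cl(2) ra rb by metis
    thus "cos A I (pl A a b) = pl (quot A I) (cos A I a) (cos A I b)"
      using cos_eq[of "pl A ?a ?b" "pl A a b"] a b ra rb A.c_pl by (simp add: quot_def)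
    have "sub A (dt A ?a ?b) (dt A a b) \<in> I" using A.e_dt[OF a b ra(1) rb(1)] I_cl(2,4,5) ra rb a by metis
    thus "cos A I (dt A a b) = dt (quot A I) (cos A I a) (cos A I b)"
      using cos_eq[of "dt A ?a ?b" "dt A a b"] a b ra rb A.c_dt by (simp add: quot_def)
    have "sub A (cc A ?a ?b) (cc A a b) \<in> I" using A.e_cc[OF a b ra(1) rb(1)] I_cl(2,6,7) ra rb a by metis
    thus "cos A I (cc A a b) = cc (quot A I) (cos A I a) (cos A I b)"
      using cos_eq[of "cc A ?a ?b" "cc A a b"] a b ra rb A.c_cc by (simp add: quot_def)
  qed
  have P1: "cos A I (sm A c a) = sm (quot A I) c (cos A I a)"
       "cos A I (dr A a) = dr (quot A I) (cos A I a)"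
    if a: "a\<in>car A" for a c
  proof -
    let ?a = "rep (cos A I a)"
    have ra: "?a \<in> car A" "sub A ?a a \<in> I" using rep_cos a by auto
    have "sub A (sm A c ?a) (sm A c a) \<in> I" using A.e_sm[OF a ra(1)] I_cl(3) ra by metis
    thus "cos A I (sm A c a) = sm (quot A I) c (cos A I a)"
      using cos_eq[of "sm A c ?a" "sm A c a"] a ra A.c_sm by (simp add: quot_def)
    have "sub A (dr A ?a) (dr A a) \<in> I" using A.e_dr[OF a ra(1)] I_cl(8) ra by metis
    thus "cos A I (dr A a) = dr (quot A I) (cos A I a)"
      using cos_eq[of "dr A ?a" "dr A a"] a ra A.c_dr by (simp add: quot_def)
  qed
  show "pres A (quot A I) (cos A I)" unfolding pres_def using P1 P2 by (auto simp: quot_def)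
  show "pres_cc A (quot A I) (cos A I)" unfolding pres_cc_def using P2 by auto
  show "pres_dr A (dr (quot A I)) (cos A I)" unfolding pres_dr_def using P1 by auto
qed

lemma quot_lin: "lin_ok (quot A I)"
  by (rule lin_transfer[OF L quot_pres quot_pres_cc quot_pres_dr]) (simp add: quot_car)

lemma cos_zr: "a\<in>car A \<Longrightarrow> cos A I a = zr (quot A I) \<longleftrightarrow> a \<in> I"
  by (simp add: quot_def cos_eq A.c_zr A.e_subz)


context fixes B :: "('k, 'b) alg" and h assumes LB: "lin_ok B" and P: "pres A B h" and K: "\<And>a. a\<in>I \<Longrightarrow> h a = zr B"
begin
interpretation B: lin_ok B by (rule LB)
lemma kill_eq: assumes a: "a\<in>car A" and b: "b\<in>car A" and s: "sub A a b \<in> I" shows "h a = h b"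
proof -
  have "h a = h (pl A b (sub A a b))" using A.e_decomp[OF a b] by simp
  also have "\<dots> = pl B (h b) (h (sub A a b))" using presD(4)[OF P b A.c_sub[OF a b]] .
  also have "\<dots> = h b" using K[OF s] B.e_plz presD(1)[OF P b] by simp
  finally show ?thesis .
qed
lemma ind_cos: assumes a: "a\<in>car A" shows "ind h (cos A I a) = h a"
  unfolding ind_def using rep_cos[OF a] kill_eq[OF _ a] by blast
lemma ind_pres: "pres (quot A I) B (ind h)"
proof -
  have QP: "\<And>a b. a\<in>car A \<Longrightarrow> b\<in>car A \<Longrightarrow> pl (quot A I) (cos A I a) (cos A I b) = cos A I (pl A a b)"
    "\<And>a b. a\<in>car A \<Longrightarrow> b\<in>car A \<Longrightarrow> dt (quot A I) (cos A I a) (cos A I b) = cos A I (dt A a b)"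
    "\<And>a c. a\<in>car A \<Longrightarrow> sm (quot A I) c (cos A I a) = cos A I (sm A c a)"
    using quot_pres unfolding pres_def by auto
  show ?thesis unfolding pres_def quot_car
  proof (intro conjI ballI allI)
    show "ind h (zr (quot A I)) = zr B" by (simp add: quot_def ind_cos A.c_zr presD(2)[OF P])
    show "ind h (un (quot A I)) = un B" by (simp add: quot_def ind_cos A.c_un presD(3)[OF P])
  next
    fix U assume "U \<in> cos A I ` car A" then obtain a where a: "a\<in>car A" "U = cos A I a" by auto
    show "ind h U \<in> car B" using a ind_cos presD(1)[OF P] by auto
    fix c show "ind h (sm (quot A I) c U) = sm B c (ind h U)"
      using a by (simp add: QP ind_cos A.c_sm presD(6)[OF P])
  next
    fix U V assume "U \<in> cos A I ` car A" "V \<in> cos A I ` car A"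
    then obtain a b where a: "a\<in>car A" "U = cos A I a" and b: "b\<in>car A" "V = cos A I b" by auto
    show "ind h (pl (quot A I) U V) = pl B (ind h U) (ind h V)"
      using a b by (simp add: QP ind_cos A.c_pl presD(4)[OF P])
    show "ind h (dt (quot A I) U V) = dt B (ind h U) (ind h V)"
      using a b by (simp add: QP ind_cos A.c_dt presD(5)[OF P])
  qed
qed
lemma ind_pres_cc: assumes PC: "pres_cc A B h" shows "pres_cc (quot A I) B (ind h)"
  unfolding pres_cc_def quot_car
proof (intro ballI)
  fix U V assume "U \<in> cos A I ` car A" "V \<in> cos A I ` car A"
  then obtain a b where a: "a\<in>car A" "U = cos A I a" and b: "b\<in>car A" "V = cos A I b" by auto
  have "cc (quot A I) U V = cos A I (cc A a b)" using quot_pres_cc a b unfolding pres_cc_def by auto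
  thus "ind h (cc (quot A I) U V) = cc B (ind h U) (ind h V)"
    using a b PC by (simp add: ind_cos A.c_cc pres_cc_def)
qed
lemma ind_pres_dr: assumes PD: "pres_dr A D h" shows "pres_dr (quot A I) D (ind h)"
  unfolding pres_dr_def quot_car
proof (intro ballI)
  fix U assume "U \<in> cos A I ` car A"
  then obtain a where a: "a\<in>car A" "U = cos A I a" by auto
  have "dr (quot A I) U = cos A I (dr A a)" using quot_pres_dr a unfolding pres_dr_def by auto
  thus "ind h (dr (quot A I) U) = D (ind h U)"
    using a PD by (simp add: ind_cos A.c_dr pres_dr_def)
qed
end
end


lemma fin_pl: "finite {t. f t \<noteq> (0::'k::field)} \<Longrightarrow> finite {t. g t \<noteq> 0} \<Longrightarrow> finite {t. f t + g t \<noteq> 0}"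
  by (rule finite_subset[of _ "{t. f t \<noteq> 0} \<union> {t. g t \<noteq> 0}"]) auto
lemma fin_sm: "finite {t. f t \<noteq> (0::'k::field)} \<Longrightarrow> finite {t. c * f t \<noteq> 0}"
  by (rule finite_subset[of _ "{t. f t \<noteq> 0}"]) auto

lemma fin_bdot: assumes "finite {t. f t \<noteq> (0::'k::field)}" "finite {t. g t \<noteq> 0}"
  shows "finite {t. (case t of BDot a b \<Rightarrow> f a * g b | _ \<Rightarrow> 0) \<noteq> 0}"
proof (rule finite_subset[of _ "(\<lambda>(a,b). BDot a b) ` ({t. f t \<noteq> 0} \<times> {t. g t \<noteq> 0})"])
  show "{t. (case t of BDot a b \<Rightarrow> f a * g b | _ \<Rightarrow> 0) \<noteq> 0} \<subseteq> (\<lambda>(a,b). BDot a b) ` ({t. f t \<noteq> 0} \<times> {t. g t \<noteq> 0})"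
    by (intro subsetI, case_tac x) (auto simp: image_iff)
qed (use assms in auto)
lemma fin_bcirc: assumes "finite {t. f t \<noteq> (0::'k::field)}" "finite {t. g t \<noteq> 0}"
  shows "finite {t. (case t of BCirc a b \<Rightarrow> f a * g b | _ \<Rightarrow> 0) \<noteq> 0}"
proof (rule finite_subset[of _ "(\<lambda>(a,b). BCirc a b) ` ({t. f t \<noteq> 0} \<times> {t. g t \<noteq> 0})"])
  show "{t. (case t of BCirc a b \<Rightarrow> f a * g b | _ \<Rightarrow> 0) \<noteq> 0} \<subseteq> (\<lambda>(a,b). BCirc a b) ` ({t. f t \<noteq> 0} \<times> {t. g t \<noteq> 0})"
    by (intro subsetI, case_tac x) (auto simp: image_iff)
qed (use assms in auto)

lemma fin_dmul: assumes "finite {t. f t \<noteq> (0::'k::field)}" "finite {t. g t \<noteq> 0}"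
  shows "finite {t. (case t of DMul a b \<Rightarrow> f a * g b | _ \<Rightarrow> 0) \<noteq> 0}"
proof (rule finite_subset[of _ "(\<lambda>(a,b). DMul a b) ` ({t. f t \<noteq> 0} \<times> {t. g t \<noteq> 0})"])
  show "{t. (case t of DMul a b \<Rightarrow> f a * g b | _ \<Rightarrow> 0) \<noteq> 0} \<subseteq> (\<lambda>(a,b). DMul a b) ` ({t. f t \<noteq> 0} \<times> {t. g t \<noteq> 0})"
    by (intro subsetI, case_tac x) (auto simp: image_iff)
qed (use assms in auto)
lemma fin_dder: assumes "finite {t. f t \<noteq> (0::'k::field)}"
  shows "finite {t. (case t of DDer a \<Rightarrow> f a | _ \<Rightarrow> 0) \<noteq> 0}"
proof (rule finite_subset[of _ "DDer ` {t. f t \<noteq> 0}"])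
  show "{t. (case t of DDer a \<Rightarrow> f a | _ \<Rightarrow> 0) \<noteq> 0} \<subseteq> DDer ` {t. f t \<noteq> 0}"
    by (intro subsetI, case_tac x) (auto simp: image_iff)
qed (use assms in auto)
lemma fin_dcc: assumes "finite {t. f t \<noteq> (0::'k::field)}" "finite {t. g t \<noteq> 0}"
  shows "finite {t. (case t of DMul a b \<Rightarrow> f a * (case b of DDer b' \<Rightarrow> g b' | _ \<Rightarrow> 0) | _ \<Rightarrow> 0) \<noteq> 0}"
  using fin_dmul[OF assms(1) fin_dder[OF assms(2)]] by simp

lemma fin_delta: "finite {t. (if t = s then 1 else (0::'k::field)) \<noteq> 0}"
  by (rule finite_subset[of _ "{s}"]) auto

lemma lin_bimag: "lin_ok (bimag :: ('k::field, 'x bterm \<Rightarrow> 'k) alg)"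
  apply unfold_locales
  apply (simp_all add: bimag_def fin_pl fin_sm fin_bdot fin_bcirc fin_delta)
  apply (simp_all add: sub_def fun_eq_iff algebra_simps split: bterm.split)
  done

lemma lin_dmag: "lin_ok (dmag :: ('k::field, 'x dterm \<Rightarrow> 'k) alg)"
  apply unfold_locales
  apply (simp_all add: dmag_def fin_pl fin_sm fin_dmul fin_dcc fin_dder fin_delta)
  apply (simp_all add: sub_def fun_eq_iff algebra_simps split: dterm.split)
  done


lemma gdnp_ideal_car: assumes L: "lin_ok A" shows "a \<in> gdnp_ideal A R \<Longrightarrow> a \<in> car A"
  by (induction rule: gdnp_ideal.induct) (auto intro: lin_ok.c_zr[OF L] lin_ok.c_pl[OF L] lin_ok.c_sm[OF L] lin_ok.c_dt[OF L] lin_ok.c_cc[OF L])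
lemma diff_ideal_car: assumes L: "lin_ok A" shows "a \<in> diff_ideal A R \<Longrightarrow> a \<in> car A"
  by (induction rule: diff_ideal.induct) (auto intro: lin_ok.c_zr[OF L] lin_ok.c_pl[OF L] lin_ok.c_sm[OF L] lin_ok.c_dt[OF L] lin_ok.c_dr[OF L])

lemma gdnp_ideal_ok: assumes "lin_ok A" "\<And>a. a\<in>car A \<Longrightarrow> dr A a = a"
  shows "ideal_ok A (gdnp_ideal A R)"
  unfolding ideal_ok_def using assms gdnp_ideal_car[OF assms(1)]
  by (auto intro: gdnp_ideal.intros)

lemma diff_ideal_ok: assumes "lin_ok A" "\<And>a b. a\<in>car A \<Longrightarrow> b\<in>car A \<Longrightarrow> cc A a b = dt A a (dr A b)"
  shows "ideal_ok A (diff_ideal A R)"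
  unfolding ideal_ok_def using assms diff_ideal_car[OF assms(1)]
  by (auto intro: diff_ideal.intros lin_ok.c_dr)

lemma gdnp_kill: assumes LA: "lin_ok A" and LB: "lin_ok B" and P: "pres A B h" and PC: "pres_cc A B h"
  and K: "\<And>s. s\<in>R \<Longrightarrow> s\<in>car A \<Longrightarrow> h s = zr B" and a: "a \<in> gdnp_ideal A R"
  shows "h a = zr B"
  using a
proof (induction rule: gdnp_ideal.induct)
  case (add a b) thus ?case using gdnp_ideal_car[OF LA] presD(4)[OF P] lin_ok.e_plz[OF LB] lin_ok.c_zr[OF LB] by metis
next
  case (smul a c) thus ?case using gdnp_ideal_car[OF LA] presD(6)[OF P] lin_ok.e_smz[OF LB] by metis
next
  case (dotl a u) thus ?case using gdnp_ideal_car[OF LA] presD(5,1)[OF P] lin_ok.e_dtz1[OF LB] by metis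
next
  case (dotr a u) thus ?case using gdnp_ideal_car[OF LA] presD(5,1)[OF P] lin_ok.e_dtz2[OF LB] by metis
next
  case (circl a u) thus ?case using gdnp_ideal_car[OF LA] PC presD(1)[OF P] lin_ok.e_ccz1[OF LB] unfolding pres_cc_def by metis
next
  case (circr a u) thus ?case using gdnp_ideal_car[OF LA] PC presD(1)[OF P] lin_ok.e_ccz2[OF LB] unfolding pres_cc_def by metis
qed (use K presD(2)[OF P] in auto)

lemma diff_kill: assumes LA: "lin_ok A" and LB: "lin_ok B" and P: "pres A B h" and PD: "pres_dr A D h"
  and DZ: "D (zr B) = zr B"
  and K: "\<And>s. s\<in>R \<Longrightarrow> s\<in>car A \<Longrightarrow> h s = zr B" and a: "a \<in> diff_ideal A R"
  shows "h a = zr B"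
  using a
proof (induction rule: diff_ideal.induct)
  case (add a b) thus ?case using diff_ideal_car[OF LA] presD(4)[OF P] lin_ok.e_plz[OF LB] lin_ok.c_zr[OF LB] by metis
next
  case (smul a c) thus ?case using diff_ideal_car[OF LA] presD(6)[OF P] lin_ok.e_smz[OF LB] by metis
next
  case (dotl a u) thus ?case using diff_ideal_car[OF LA] presD(5,1)[OF P] lin_ok.e_dtz1[OF LB] by metis
next
  case (dotr a u) thus ?case using diff_ideal_car[OF LA] presD(5,1)[OF P] lin_ok.e_dtz2[OF LB] by metis
next
  case (der a) thus ?case using diff_ideal_car[OF LA] PD DZ unfolding pres_dr_def by metis
qed (use K presD(2)[OF P] in auto)


lemma pres_dr_comp: "pres A B h \<Longrightarrow> pres_dr A (dr B) h \<Longrightarrow> pres_dr B D g \<Longrightarrow> pres_dr A D (g \<circ> h)"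
  unfolding pres_def pres_dr_def by auto

abbreviation "I0 \<equiv> gdnp_ideal bimag (gdnp_rels bimag)"
abbreviation "\<pi>1 \<equiv> cos bimag I0"
abbreviation "J0 \<equiv> diff_ideal dmag (diff_rels dmag)"
abbreviation "\<pi>k \<equiv> cos dmag J0"

lemma dr_bimag: "dr bimag a = a" by (simp add: bimag_def)
lemma cc_dmag: "cc dmag a b = dt dmag a (dr dmag b)"
  by (simp add: dmag_def fun_eq_iff split: dterm.split)

lemma I0_ok: "ideal_ok (bimag :: ('k::field, 'x bterm \<Rightarrow> 'k) alg) (gdnp_ideal bimag R)"
  by (rule gdnp_ideal_ok[OF lin_bimag]) (simp add: dr_bimag)
lemma J0_ok: "ideal_ok (dmag :: ('k::field, 'x dterm \<Rightarrow> 'k) alg) (diff_ideal dmag R)"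
  by (rule diff_ideal_ok[OF lin_dmag]) (simp add: cc_dmag)

lemma GDNP_q: "(GDNP :: ('k::field, ('x bterm \<Rightarrow> 'k) set) alg) = quot bimag I0" by (simp add: GDNP_def)
lemma kX_q: "(kX :: ('k::field, ('x dterm \<Rightarrow> 'k) set) alg) = quot dmag J0" by (simp add: kX_def)

lemma lin_GDNP: "lin_ok (GDNP :: ('k::field, ('x bterm \<Rightarrow> 'k) set) alg)"
  unfolding GDNP_q by (rule quot_lin[OF lin_bimag I0_ok])
lemma lin_kX: "lin_ok (kX :: ('k::field, ('x dterm \<Rightarrow> 'k) set) alg)"
  unfolding kX_q by (rule quot_lin[OF lin_dmag J0_ok])

lemma pi1: "pres bimag (GDNP :: ('k::field, ('x bterm \<Rightarrow> 'k) set) alg) \<pi>1"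
  "pres_cc bimag (GDNP :: ('k::field, ('x bterm \<Rightarrow> 'k) set) alg) \<pi>1"
  "pres_dr bimag (dr (GDNP :: ('k::field, ('x bterm \<Rightarrow> 'k) set) alg)) \<pi>1"
  "\<pi>1 ` car bimag = car (GDNP :: ('k::field, ('x bterm \<Rightarrow> 'k) set) alg)"
  unfolding GDNP_q
  by (rule quot_pres[OF lin_bimag I0_ok] quot_pres_cc[OF lin_bimag I0_ok] quot_pres_dr[OF lin_bimag I0_ok]
     quot_car[OF lin_bimag I0_ok, symmetric])+

lemma pik: "pres dmag (kX :: ('k::field, ('x dterm \<Rightarrow> 'k) set) alg) \<pi>k"
  "pres_cc dmag (kX :: ('k::field, ('x dterm \<Rightarrow> 'k) set) alg) \<pi>k"
  "pres_dr dmag (dr (kX :: ('k::field, ('x dterm \<Rightarrow> 'k) set) alg)) \<pi>k"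
  "\<pi>k ` car dmag = car (kX :: ('k::field, ('x dterm \<Rightarrow> 'k) set) alg)"
  unfolding kX_q
  by (rule quot_pres[OF lin_dmag J0_ok] quot_pres_cc[OF lin_dmag J0_ok] quot_pres_dr[OF lin_dmag J0_ok]
     quot_car[OF lin_dmag J0_ok, symmetric])+

lemma dr_GDNP: assumes "U \<in> car (GDNP :: ('k::field, ('x bterm \<Rightarrow> 'k) set) alg)" shows "dr GDNP U = U"
proof -
  obtain a where a: "a \<in> car bimag" "U = \<pi>1 a" using assms pi1(4) by blast
  thus ?thesis using pi1(3) unfolding pres_dr_def by (metis dr_bimag)
qed

lemma GDNP_ideal_ok: "ideal_ok (GDNP :: ('k::field, ('x bterm \<Rightarrow> 'k) set) alg) (gdnp_ideal GDNP R)"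
  by (rule gdnp_ideal_ok[OF lin_GDNP]) (simp add: dr_GDNP)

lemma cc_kX: assumes "U \<in> car (kX :: ('k::field, ('x dterm \<Rightarrow> 'k) set) alg)" "V \<in> car (kX :: ('k::field, ('x dterm \<Rightarrow> 'k) set) alg)"
  shows "cc kX U V = dt kX U (dr kX V)"
proof -
  obtain a where a: "a \<in> car dmag" "U = \<pi>k a" using assms pik(4) by blast
  obtain b where b: "b \<in> car dmag" "V = \<pi>k b" using assms pik(4) by blast
  have "cc kX U V = \<pi>k (cc dmag a b)" using pik(2) a b unfolding pres_cc_def by auto
  also have "\<dots> = \<pi>k (dt dmag a (dr dmag b))" by (simp add: cc_dmag)
  also have "\<dots> = dt kX (\<pi>k a) (\<pi>k (dr dmag b))"
    using presD(5)[OF pik(1)] a b lin_ok.c_dr[OF lin_dmag] by blast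
  also have "\<dots> = dt kX U (dr kX V)" using a b by (simp add: pik(3)[unfolded pres_dr_def, rule_format])
  finally show ?thesis .
qed

lemma kX_ideal_ok: "ideal_ok (kX :: ('k::field, ('x dterm \<Rightarrow> 'k) set) alg) (diff_ideal kX R)"
  by (rule diff_ideal_ok[OF lin_kX]) (simp add: cc_kX)

lemma rel_bimag: assumes "X \<in> car bimag" "Y \<in> car bimag" "sub bimag X Y \<in> gdnp_rels (bimag :: ('k::field, 'x bterm \<Rightarrow> 'k) alg)"
  shows "\<pi>1 X = \<pi>1 Y"
  using assms cos_eq[OF lin_bimag I0_ok] gdnp_ideal.gen lin_ok.c_sub[OF lin_bimag] by metis

lemma rel_dmag: assumes "X \<in> car dmag" "Y \<in> car dmag" "sub dmag X Y \<in> diff_rels (dmag :: ('k::field, 'x dterm \<Rightarrow> 'k) alg)"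
  shows "\<pi>k X = \<pi>k Y"
  using assms cos_eq[OF lin_dmag J0_ok] diff_ideal.gen lin_ok.c_sub[OF lin_dmag] by metis

context fixes u v w :: "'x bterm \<Rightarrow> 'k::field" assumes uvw: "u \<in> car bimag" "v \<in> car bimag" "w \<in> car bimag"
begin
lemma mem_rels: "sub bimag (dt bimag u v) (dt bimag v u) \<in> gdnp_rels bimag"
  "sub bimag (dt bimag (dt bimag u v) w) (dt bimag u (dt bimag v w)) \<in> gdnp_rels bimag"
  "sub bimag (dt bimag (un bimag) u) u \<in> gdnp_rels bimag"
  "sub bimag (cc bimag (dt bimag u v) w) (dt bimag u (cc bimag v w)) \<in> gdnp_rels bimag"
  unfolding gdnp_rels_def by (intro UN_I[OF uvw(1)] UN_I[OF uvw(2)] UN_I[OF uvw(3)]; simp)+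
lemma rb_comm: "\<pi>1 (dt bimag u v) = \<pi>1 (dt bimag v u)"
  using rel_bimag mem_rels uvw lin_ok.c_dt[OF lin_bimag] by metis
lemma rb_assoc: "\<pi>1 (dt bimag (dt bimag u v) w) = \<pi>1 (dt bimag u (dt bimag v w))"
  using rel_bimag mem_rels uvw lin_ok.c_dt[OF lin_bimag] by metis
lemma rb_unit: "\<pi>1 (dt bimag (un bimag) u) = \<pi>1 u"
  using rel_bimag mem_rels uvw lin_ok.c_dt[OF lin_bimag] lin_ok.c_un[OF lin_bimag] by metis
lemma rb_dotcc: "\<pi>1 (cc bimag (dt bimag u v) w) = \<pi>1 (dt bimag u (cc bimag v w))"
  using rel_bimag mem_rels uvw lin_ok.c_dt[OF lin_bimag] lin_ok.c_cc[OF lin_bimag] by metis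
end

context fixes u :: "'x dterm \<Rightarrow> 'k::field" assumes uv: "u \<in> car dmag"
begin
lemma mem_drels: "sub dmag (dt dmag (un dmag) u) u \<in> diff_rels dmag"
  unfolding diff_rels_def by (intro UN_I[OF uv(1)]; simp)
lemma rd_unit: "\<pi>k (dt dmag (un dmag) u) = \<pi>k u"
  using rel_dmag mem_drels uv lin_ok.c_dt[OF lin_dmag] lin_ok.c_un[OF lin_dmag] by metis
end


definition dl :: "'a \<Rightarrow> 'a \<Rightarrow> 'k::field" where "dl s = (\<lambda>t. if t = s then 1 else 0)"

lemma uniq_lin:
  fixes M :: "('k::field, 'a \<Rightarrow> 'k) alg" and B :: "('k, 'b) alg"
  assumes cM: "car M = {f. finite {t. f t \<noteq> 0}}" and pM: "pl M = (\<lambda>f g t. f t + g t)"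
    and sM: "sm M = (\<lambda>c f t. c * f t)" and zM: "zr M = (\<lambda>t. 0)"
    and P1: "pres M B g1" and P2: "pres M B g2" and D: "\<And>t. g1 (dl t) = g2 (dl t)"
    and f: "f \<in> car M"
  shows "g1 f = g2 f"
proof -
  have dlc: "dl t \<in> car M" for t by (simp add: cM dl_def fin_delta)
  have "\<forall>f. {t. f t \<noteq> 0} \<subseteq> F \<longrightarrow> g1 f = g2 f" if "finite F" for F
    using that
  proof (induction F rule: finite_induct)
    case empty
    { fix f :: "'a \<Rightarrow> 'k" assume "{t. f t \<noteq> 0} \<subseteq> {}"
      hence "f = zr M" by (auto simp: zM fun_eq_iff)
      hence "g1 f = g2 f" using presD(2)[OF P1] presD(2)[OF P2] by simp }
    thus ?case by blast
  next
    case (insert x F)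
    { fix f :: "'a \<Rightarrow> 'k" assume sf: "{t. f t \<noteq> 0} \<subseteq> insert x F"
      let ?f = "f(x := 0)"
      have s': "{t. ?f t \<noteq> 0} \<subseteq> F" using sf by auto
      have c': "?f \<in> car M" using finite_subset[OF s' insert(1)] cM by simp
      have c2: "sm M (f x) (dl x) \<in> car M" by (simp add: sM cM dl_def fin_sm fin_delta)
      have fe: "f = pl M ?f (sm M (f x) (dl x))" by (auto simp: pM sM dl_def fun_eq_iff)
      have e: "g1 ?f = g2 ?f" using insert(3) s' by blast
      have "g1 f = pl B (g1 ?f) (sm B (f x) (g1 (dl x)))"
        by (subst fe) (simp add: presD(4,6)[OF P1] c' c2 dlc)
      also have "\<dots> = pl B (g2 ?f) (sm B (f x) (g2 (dl x)))" by (simp only: e D)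
      also have "\<dots> = g2 f" by (subst (2) fe) (simp add: presD(4,6)[OF P2] c' c2 dlc)
      finally have "g1 f = g2 f" . }
    thus ?case by blast
  qed
  thus ?thesis using f cM by auto
qed

lemma dl_b: "dl BE = un bimag" "dl (BDot a b) = dt bimag (dl a) (dl b)" "dl (BCirc a b) = cc bimag (dl a) (dl b)"
  "dl t \<in> car bimag"
  by (auto simp: dl_def bimag_def fun_eq_iff fin_delta split: bterm.split)
lemma dl_d: "dl DE = un dmag" "dl (DMul a b) = dt dmag (dl a) (dl b)" "dl (DDer a) = dr dmag (dl a)"
  "dl t \<in> car dmag"
  by (auto simp: dl_def dmag_def fun_eq_iff fin_delta split: dterm.split)

lemma uniq_bimag:
  fixes B :: "('k::field, 'b) alg"
  assumes P1: "pres bimag B g1" and P2: "pres bimag B g2"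
    and C1: "pres_cc bimag B g1" and C2: "pres_cc bimag B g2"
    and D: "\<And>x. g1 (dl (BV x)) = g2 (dl (BV x))" and f: "f \<in> car (bimag :: ('k, 'x bterm \<Rightarrow> 'k) alg)"
  shows "g1 f = g2 f"
proof (rule uniq_lin[OF _ _ _ _ P1 P2 _ f])
  fix t :: "'x bterm"
  show "g1 (dl t) = g2 (dl t)"
  proof (induction t)
    case (BV x) thus ?case using D by simp
  next
    case BE thus ?case by (simp add: dl_b presD(3)[OF P1] presD(3)[OF P2])
  next
    case (BDot a b) thus ?case by (simp add: dl_b presD(5)[OF P1] presD(5)[OF P2])
  next
    case (BCirc a b) thus ?case using C1 C2 by (simp add: dl_b pres_cc_def)
  qed
qed (simp_all add: bimag_def)

lemma uniq_dmag:
  fixes B :: "('k::field, 'b) alg"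
  assumes P1: "pres dmag B g1" and P2: "pres dmag B g2"
    and C1: "pres_dr dmag Dr g1" and C2: "pres_dr dmag Dr g2"
    and D: "\<And>x. g1 (dl (DV x)) = g2 (dl (DV x))" and f: "f \<in> car (dmag :: ('k, 'x dterm \<Rightarrow> 'k) alg)"
  shows "g1 f = g2 f"
proof (rule uniq_lin[OF _ _ _ _ P1 P2 _ f])
  fix t :: "'x dterm"
  show "g1 (dl t) = g2 (dl t)"
  proof (induction t)
    case (DV x) thus ?case using D by simp
  next
    case DE thus ?case by (simp add: dl_d presD(3)[OF P1] presD(3)[OF P2])
  next
    case (DMul a b) thus ?case by (simp add: dl_d presD(5)[OF P1] presD(5)[OF P2])
  next
    case (DDer a) thus ?case using C1 C2 by (simp add: dl_d pres_dr_def)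
  qed
qed (simp_all add: dmag_def)


fun Fb :: "'x dterm \<Rightarrow> 'x bterm \<Rightarrow> 'k::field" where
  "Fb (DV x) = dl (BV x)" | "Fb DE = un bimag" | "Fb (DMul a b) = dt bimag (Fb a) (Fb b)"
| "Fb (DDer a) = cc bimag (un bimag) (Fb a)"

definition Fh :: "('x dterm \<Rightarrow> 'k) \<Rightarrow> 'x bterm \<Rightarrow> 'k::field" where
  "Fh g = (\<lambda>t. \<Sum>s\<in>{s. g s \<noteq> 0}. g s * Fb s t)"

lemma Fb_car: "Fb s \<in> car (bimag :: ('k::field, 'x bterm \<Rightarrow> 'k) alg)"
  by (induction s) (auto simp: dl_b lin_ok.c_un[OF lin_bimag] lin_ok.c_dt[OF lin_bimag] lin_ok.c_cc[OF lin_bimag])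

lemma Fh_sup: "finite A \<Longrightarrow> {s. g s \<noteq> 0} \<subseteq> A \<Longrightarrow> Fh g = (\<lambda>t. \<Sum>s\<in>A. g s * Fb s t)"
  unfolding Fh_def by (rule ext, rule sum.mono_neutral_left) auto

lemma Fh_car: assumes g: "g \<in> car (dmag :: ('k::field, 'x dterm \<Rightarrow> 'k) alg)"
  shows "Fh g \<in> car (bimag :: ('k, 'x bterm \<Rightarrow> 'k) alg)"
proof -
  have fg: "finite {s. g s \<noteq> 0}" using g by (simp add: dmag_def)
  have fb: "finite {t. Fb s t \<noteq> (0::'k)}" for s :: "'x dterm" using Fb_car[of s] by (simp add: bimag_def)
  have "{t. Fh g t \<noteq> 0} \<subseteq> (\<Union>s\<in>{s. g s \<noteq> 0}. {t. Fb s t \<noteq> (0::'k)})"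
  proof
    fix t assume "t \<in> {t. Fh g t \<noteq> 0}"
    hence "(\<Sum>s\<in>{s. g s \<noteq> 0}. g s * Fb s t) \<noteq> 0" by (simp add: Fh_def)
    hence "\<exists>s\<in>{s. g s \<noteq> 0}. g s * Fb s t \<noteq> 0" using sum.neutral[of "{s. g s \<noteq> 0}" "\<lambda>s. g s * Fb s t"] by blast
    thus "t \<in> (\<Union>s\<in>{s. g s \<noteq> 0}. {t. Fb s t \<noteq> (0::'k)})" by auto
  qed
  moreover have "finite (\<Union>s\<in>{s. g s \<noteq> 0}. {t. Fb s t \<noteq> (0::'k)})" using fg fb by blast
  ultimately have "finite {t. Fh g t \<noteq> 0}" by (rule finite_subset)
  thus ?thesis by (simp add: bimag_def)
qed

context fixes g h :: "'x dterm \<Rightarrow> 'k::field"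
  assumes g: "g \<in> car dmag" and h: "h \<in> car dmag"
begin
lemma fg: "finite {s. g s \<noteq> 0}" and fh: "finite {s. h s \<noteq> 0}" using g h by (simp_all add: dmag_def)

lemma Fh_pl: "Fh (pl dmag g h) = pl bimag (Fh g) (Fh h)"
proof -
  let ?A = "{s. g s \<noteq> 0} \<union> {s. h s \<noteq> 0}"
  have fA: "finite ?A" using fg fh by auto
  have "Fh (pl dmag g h) = (\<lambda>t. \<Sum>s\<in>?A. pl dmag g h s * Fb s t)"
    by (rule Fh_sup[OF fA]) (auto simp: dmag_def)
  moreover have "Fh g = (\<lambda>t. \<Sum>s\<in>?A. g s * Fb s t)" by (rule Fh_sup[OF fA]) auto
  moreover have "Fh h = (\<lambda>t. \<Sum>s\<in>?A. h s * Fb s t)" by (rule Fh_sup[OF fA]) auto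
  ultimately show ?thesis by (simp add: bimag_def dmag_def fun_eq_iff distrib_right sum.distrib)
qed

lemma Fh_sm: "Fh (sm dmag c g) = sm bimag c (Fh g)"
proof -
  have "Fh (sm dmag c g) = (\<lambda>t. \<Sum>s\<in>{s. g s \<noteq> 0}. sm dmag c g s * Fb s t)"
    by (rule Fh_sup[OF fg]) (auto simp: dmag_def)
  thus ?thesis by (simp add: bimag_def dmag_def Fh_def fun_eq_iff sum_distrib_left mult.assoc)
qed

lemma Fh_dt: "Fh (dt dmag g h) = dt bimag (Fh g) (Fh h)"
proof -
  let ?G = "{s. g s \<noteq> 0}" and ?H = "{s. h s \<noteq> 0}"
  let ?A = "(\<lambda>(a,b). DMul a b) ` (?G \<times> ?H)"
  have fA: "finite ?A" using fg fh by auto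
  have inj: "inj_on (\<lambda>(a,b). DMul a b) (?G \<times> ?H)" by (auto simp: inj_on_def)
  have sub: "{s. dt dmag g h s \<noteq> 0} \<subseteq> ?A"
    by (intro subsetI, case_tac x) (auto simp: dmag_def image_iff)
  have "Fh (dt dmag g h) = (\<lambda>t. \<Sum>s\<in>?A. dt dmag g h s * Fb s t)" by (rule Fh_sup[OF fA sub])
  also have "\<dots> = (\<lambda>t. \<Sum>p\<in>?G \<times> ?H. g (fst p) * h (snd p) * dt bimag (Fb (fst p)) (Fb (snd p)) t)"
    by (subst sum.reindex[OF inj]) (auto simp: dmag_def intro!: sum.cong)
  also have "\<dots> = dt bimag (Fh g) (Fh h)"
  proof (rule ext)
    fix t show "(\<Sum>p\<in>?G \<times> ?H. g (fst p) * h (snd p) * dt bimag (Fb (fst p)) (Fb (snd p)) t) = dt bimag (Fh g) (Fh h) t"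
    proof (cases t)
      case (BDot x y)
      have "dt bimag (Fh g) (Fh h) t = (\<Sum>a\<in>?G. g a * Fb a x) * (\<Sum>b\<in>?H. h b * Fb b y)"
        by (simp add: BDot bimag_def Fh_def)
      also have "\<dots> = (\<Sum>a\<in>?G. \<Sum>b\<in>?H. (g a * Fb a x) * (h b * Fb b y))" by (rule sum_product)
      also have "\<dots> = (\<Sum>p\<in>?G \<times> ?H. (g (fst p) * Fb (fst p) x) * (h (snd p) * Fb (snd p) y))"
        by (subst sum.cartesian_product) (simp add: case_prod_beta)
      finally show ?thesis by (simp add: BDot bimag_def mult_ac)
    qed (simp_all add: bimag_def)
  qed
  finally show ?thesis .
qed

lemma Fh_dr: "Fh (dr dmag g) = cc bimag (un bimag) (Fh g)"
proof -
  let ?G = "{s. g s \<noteq> 0}"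
  let ?A = "DDer ` ?G"
  have fA: "finite ?A" using fg by auto
  have inj: "inj_on DDer ?G" by (auto simp: inj_on_def)
  have sub: "{s. dr dmag g s \<noteq> 0} \<subseteq> ?A"
    by (intro subsetI, case_tac x) (auto simp: dmag_def image_iff)
  have "Fh (dr dmag g) = (\<lambda>t. \<Sum>s\<in>?A. dr dmag g s * Fb s t)" by (rule Fh_sup[OF fA sub])
  also have "\<dots> = (\<lambda>t. \<Sum>a\<in>?G. g a * cc bimag (un bimag) (Fb a) t)"
    by (subst sum.reindex[OF inj]) (auto simp: dmag_def intro!: sum.cong)
  also have "\<dots> = cc bimag (un bimag) (Fh g)"
  proof (rule ext)
    fix t show "(\<Sum>a\<in>?G. g a * cc bimag (un bimag) (Fb a) t) = cc bimag (un bimag) (Fh g) t"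
      by (cases t) (simp_all add: bimag_def Fh_def sum_distrib_left mult_ac)
  qed
  finally show ?thesis .
qed
end

lemma Fh_zr: "Fh (zr dmag) = zr bimag" by (simp add: Fh_def dmag_def bimag_def fun_eq_iff)
lemma Fh_dl: "Fh (dl s) = Fb s"
proof -
  have "Fh (dl s) = (\<lambda>t. \<Sum>r\<in>{s}. dl s r * Fb r t)" by (rule Fh_sup) (auto simp: dl_def)
  thus ?thesis by (simp add: dl_def)
qed
lemma Fh_un: "Fh (un dmag) = (un bimag :: 'x bterm \<Rightarrow> 'k::field)"
  using Fh_dl[of DE] by (simp add: dl_d)


abbreviation "I2 S \<equiv> gdnp_ideal GDNP S"
abbreviation "\<pi>2 S \<equiv> cos GDNP (I2 S)"
abbreviation "Ld \<equiv> gdnp_ideal GDNP (lozenge GDNP)"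
abbreviation "J1 R \<equiv> diff_ideal kX R"
abbreviation "\<pi>K R \<equiv> cos kX (J1 R)"

lemma Q_q: "GDNPq S = quot GDNP (I2 S)" by (simp add: GDNPq_def)
lemma D_q: "DGDNP = quot GDNP Ld" by (simp add: DGDNP_def)
lemma K_q: "kXR R = quot kX (J1 R)" by (simp add: kXR_def)
lemma dproj_eq: "dproj = cos GDNP Ld" by (simp add: dproj_def fun_eq_iff)

lemma lin_Q: "lin_ok (GDNPq S)" unfolding Q_q by (rule quot_lin[OF lin_GDNP GDNP_ideal_ok])
lemma lin_D: "lin_ok DGDNP" unfolding D_q by (rule quot_lin[OF lin_GDNP GDNP_ideal_ok])
lemma lin_K: "lin_ok (kXR R)" unfolding K_q by (rule quot_lin[OF lin_kX kX_ideal_ok])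

lemma pi2: "pres GDNP (GDNPq S) (\<pi>2 S)" "pres_cc GDNP (GDNPq S) (\<pi>2 S)"
  "pres_dr GDNP (dr (GDNPq S)) (\<pi>2 S)" "\<pi>2 S ` car GDNP = car (GDNPq S)"
  unfolding Q_q
  by (rule quot_pres[OF lin_GDNP GDNP_ideal_ok] quot_pres_cc[OF lin_GDNP GDNP_ideal_ok]
     quot_pres_dr[OF lin_GDNP GDNP_ideal_ok] quot_car[OF lin_GDNP GDNP_ideal_ok, symmetric])+

lemma pid: "pres GDNP DGDNP dproj" "pres_cc GDNP DGDNP dproj"
  unfolding D_q dproj_eq
  by (rule quot_pres[OF lin_GDNP GDNP_ideal_ok] quot_pres_cc[OF lin_GDNP GDNP_ideal_ok])+

lemma piK: "pres kX (kXR R) (\<pi>K R)" "pres_cc kX (kXR R) (\<pi>K R)"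
  "pres_dr kX (dr (kXR R)) (\<pi>K R)" "\<pi>K R ` car kX = car (kXR R)"
  unfolding K_q
  by (rule quot_pres[OF lin_kX kX_ideal_ok] quot_pres_cc[OF lin_kX kX_ideal_ok]
     quot_pres_dr[OF lin_kX kX_ideal_ok] quot_car[OF lin_kX kX_ideal_ok, symmetric])+

definition pp :: "('x bterm \<Rightarrow> 'k::field) set set \<Rightarrow> ('x bterm \<Rightarrow> 'k) \<Rightarrow> ('x bterm \<Rightarrow> 'k) set set" where
  "pp S = \<pi>2 S \<circ> \<pi>1"
definition qq :: "('x dterm \<Rightarrow> 'k::field) set set \<Rightarrow> ('x dterm \<Rightarrow> 'k) \<Rightarrow> ('x dterm \<Rightarrow> 'k) set set" where
  "qq R = \<pi>K R \<circ> \<pi>k"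

lemma pp: "pres bimag (GDNPq S) (pp S)" "pres_cc bimag (GDNPq S) (pp S)" "pp S ` car bimag = car (GDNPq S)"
proof -
  show "pres bimag (GDNPq S) (pp S)" unfolding pp_def by (rule pres_comp[OF pi1(1) pi2(1)])
  show "pres_cc bimag (GDNPq S) (pp S)" unfolding pp_def by (rule pres_cc_comp[OF pi1(1) pi1(2) pi2(2)])
  show "pp S ` car bimag = car (GDNPq S)" unfolding pp_def by (metis image_comp pi1(4) pi2(4))
qed

lemma qq: "pres dmag (kXR R) (qq R)" "pres_cc dmag (kXR R) (qq R)" "pres_dr dmag (dr (kXR R)) (qq R)"
  "qq R ` car dmag = car (kXR R)"
proof -
  show "pres dmag (kXR R) (qq R)" unfolding qq_def by (rule pres_comp[OF pik(1) piK(1)])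
  show "pres_cc dmag (kXR R) (qq R)" unfolding qq_def by (rule pres_cc_comp[OF pik(1) pik(2) piK(2)])
  show "pres_dr dmag (dr (kXR R)) (qq R)" unfolding qq_def by (rule pres_dr_comp[OF pik(1) pik(3) piK(3)])
  show "qq R ` car dmag = car (kXR R)" unfolding qq_def by (metis image_comp pik(4) piK(4))
qed

lemma ex_pp: "u \<in> car (GDNPq S) \<Longrightarrow> \<exists>a\<in>car bimag. u = pp S a" using pp(3) by blast
lemma ex_qq: "u \<in> car (kXR R) \<Longrightarrow> \<exists>a\<in>car dmag. u = qq R a" using qq(4) by blast

lemma pp_fold: "a\<in>car bimag \<Longrightarrow> b\<in>car bimag \<Longrightarrow> dt (GDNPq S) (pp S a) (pp S b) = pp S (dt bimag a b)"
  "a\<in>car bimag \<Longrightarrow> b\<in>car bimag \<Longrightarrow> cc (GDNPq S) (pp S a) (pp S b) = pp S (cc bimag a b)"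
  "un (GDNPq S) = pp S (un bimag)"
  using pp(1,2)[of S] by (simp_all add: presD pres_cc_def)

lemma pp_eq1: "a\<in>car bimag \<Longrightarrow> b\<in>car bimag \<Longrightarrow> \<pi>1 a = \<pi>1 b \<Longrightarrow> pp S a = pp S b"
  by (simp add: pp_def)

context fixes S :: "('x bterm \<Rightarrow> 'k::field) set set"
begin
lemma Q_comm: assumes "u \<in> car (GDNPq S)" "v \<in> car (GDNPq S)" shows "dt (GDNPq S) u v = dt (GDNPq S) v u"
proof -
  obtain a where a: "a\<in>car bimag" "u = pp S a" using ex_pp[OF assms(1)] by blast
  obtain b where b: "b\<in>car bimag" "v = pp S b" using ex_pp[OF assms(2)] by blast
  have "dt (GDNPq S) u v = pp S (dt bimag a b)" using a b by (simp add: pp_fold(1))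
  also have "\<dots> = pp S (dt bimag b a)" by (simp add: pp_def rb_comm[OF a(1) b(1) a(1)])
  also have "\<dots> = dt (GDNPq S) v u" using a b by (simp add: pp_fold(1))
  finally show ?thesis .
qed
lemma Q_assoc: assumes "u \<in> car (GDNPq S)" "v \<in> car (GDNPq S)" "w \<in> car (GDNPq S)"
  shows "dt (GDNPq S) (dt (GDNPq S) u v) w = dt (GDNPq S) u (dt (GDNPq S) v w)"
proof -
  obtain a where a: "a\<in>car bimag" "u = pp S a" using ex_pp[OF assms(1)] by blast
  obtain b where b: "b\<in>car bimag" "v = pp S b" using ex_pp[OF assms(2)] by blast
  obtain c where c: "c\<in>car bimag" "w = pp S c" using ex_pp[OF assms(3)] by blast
  note C = lin_ok.c_dt[OF lin_bimag]
  have "dt (GDNPq S) (dt (GDNPq S) u v) w = pp S (dt bimag (dt bimag a b) c)" using a b c by (simp add: pp_fold(1) C)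
  also have "\<dots> = pp S (dt bimag a (dt bimag b c))" by (simp add: pp_def rb_assoc[OF a(1) b(1) c(1)])
  also have "\<dots> = dt (GDNPq S) u (dt (GDNPq S) v w)" using a b c by (simp add: pp_fold(1) C)
  finally show ?thesis .
qed
lemma Q_unit: assumes "u \<in> car (GDNPq S)" shows "dt (GDNPq S) (un (GDNPq S)) u = u"
proof -
  obtain a where a: "a\<in>car bimag" "u = pp S a" using ex_pp[OF assms(1)] by blast
  have "dt (GDNPq S) (un (GDNPq S)) u = pp S (dt bimag (un bimag) a)"
    using a by (simp add: pp_fold(1,3) lin_ok.c_un[OF lin_bimag])
  also have "\<dots> = pp S a" by (simp add: pp_def rb_unit[OF a(1) a(1) a(1)])
  finally show ?thesis using a by simp
qed
lemma Q_dotcc: assumes "u \<in> car (GDNPq S)" "v \<in> car (GDNPq S)" "w \<in> car (GDNPq S)"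
  shows "cc (GDNPq S) (dt (GDNPq S) u v) w = dt (GDNPq S) u (cc (GDNPq S) v w)"
proof -
  obtain a where a: "a\<in>car bimag" "u = pp S a" using ex_pp[OF assms(1)] by blast
  obtain b where b: "b\<in>car bimag" "v = pp S b" using ex_pp[OF assms(2)] by blast
  obtain c where c: "c\<in>car bimag" "w = pp S c" using ex_pp[OF assms(3)] by blast
  note C = lin_ok.c_dt[OF lin_bimag] lin_ok.c_cc[OF lin_bimag]
  have "cc (GDNPq S) (dt (GDNPq S) u v) w = pp S (cc bimag (dt bimag a b) c)" using a b c by (simp add: pp_fold(1,2) C)
  also have "\<dots> = pp S (dt bimag a (cc bimag b c))" by (simp add: pp_def rb_dotcc[OF a(1) b(1) c(1)])
  also have "\<dots> = dt (GDNPq S) u (cc (GDNPq S) v w)" using a b c by (simp add: pp_fold(1,2) C)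
  finally show ?thesis .
qed

lemma Q_unit_r: "u \<in> car (GDNPq S) \<Longrightarrow> dt (GDNPq S) u (un (GDNPq S)) = u"
  using Q_comm Q_unit lin_ok.c_un[OF lin_Q] by metis
lemma Q_cc: assumes "u \<in> car (GDNPq S)" "v \<in> car (GDNPq S)"
  shows "cc (GDNPq S) u v = dt (GDNPq S) u (cc (GDNPq S) (un (GDNPq S)) v)"
  using Q_dotcc[OF assms(1) lin_ok.c_un[OF lin_Q] assms(2)] Q_unit_r[OF assms(1)] by simp
end


context
  fixes S :: "('x::wellorder bterm \<Rightarrow> 'k::field) set set"
    and \<theta> :: "('x bterm \<Rightarrow> 'k) set set \<Rightarrow> ('x dterm \<Rightarrow> 'k) set"
  assumes S_sub: "S \<subseteq> car (GDNP :: ('k, ('x bterm \<Rightarrow> 'k) set) alg)"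
    and ident: "\<forall>x\<in>car (GDNPq S). \<forall>y\<in>car (GDNPq S). \<forall>z\<in>car (GDNPq S).
        cc (GDNPq S) x (dt (GDNPq S) y z)
          = pl (GDNPq S) (dt (GDNPq S) (cc (GDNPq S) x y) z) (dt (GDNPq S) (cc (GDNPq S) x z) y)"
    and theta_hom: "gdnp_hom DGDNP kX \<theta>"
    and theta_gen: "\<forall>a. \<theta> (dgen a) = kgen a"
begin

abbreviation "Q \<equiv> GDNPq S"
abbreviation "e \<equiv> un (GDNPq S)"

lemma th_pres: "pres DGDNP kX \<theta>" and th_cc: "pres_cc DGDNP kX \<theta>"
proof -
  have H: "lin_hom DGDNP kX \<theta>" "\<forall>a\<in>car DGDNP. \<forall>b\<in>car DGDNP. \<theta> (dt DGDNP a b) = dt kX (\<theta> a) (\<theta> b)"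
    "\<forall>a\<in>car DGDNP. \<forall>b\<in>car DGDNP. \<theta> (cc DGDNP a b) = cc kX (\<theta> a) (\<theta> b)" "\<theta> (un DGDNP) = un kX"
    using theta_hom unfolding gdnp_hom_def by auto
  have z: "zr DGDNP \<in> car DGDNP" by (rule lin_ok.c_zr[OF lin_D])
  have "\<theta> (zr DGDNP) = \<theta> (sm DGDNP 0 (zr DGDNP))" by (simp add: lin_ok.e_sm0[OF lin_D z])
  also have "\<dots> = sm kX 0 (\<theta> (zr DGDNP))" using H(1) z unfolding lin_hom_def by blast
  also have "\<dots> = zr kX" using H(1) z lin_ok.e_sm0[OF lin_kX] unfolding lin_hom_def by blast
  finally have "\<theta> (zr DGDNP) = zr kX" .
  thus "pres DGDNP kX \<theta>" using H unfolding pres_def lin_hom_def by auto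
  show "pres_cc DGDNP kX \<theta>" using H unfolding pres_cc_def by auto
qed

definition TT where "TT = \<theta> \<circ> dproj \<circ> \<pi>1"

lemma TT: "pres bimag kX TT" "pres_cc bimag kX TT"
proof -
  have p: "pres bimag DGDNP (dproj \<circ> \<pi>1)" by (rule pres_comp[OF pi1(1) pid(1)])
  have c: "pres_cc bimag DGDNP (dproj \<circ> \<pi>1)" by (rule pres_cc_comp[OF pi1(1) pi1(2) pid(2)])
  show "pres bimag kX TT" unfolding TT_def using pres_comp[OF p th_pres] by (simp add: comp_assoc)
  show "pres_cc bimag kX TT" unfolding TT_def using pres_cc_comp[OF p c th_cc] by (simp add: comp_assoc)
qed

lemma TT_gen: "TT (dl (BV x)) = \<pi>k (dl (DV x))"
  using theta_gen by (simp add: TT_def dl_def dgen_def gdnp_gen_def kgen_def)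

lemma Q_ident: "x\<in>car Q \<Longrightarrow> y\<in>car Q \<Longrightarrow> z\<in>car Q \<Longrightarrow>
   cc Q x (dt Q y z) = pl Q (dt Q (cc Q x y) z) (dt Q (cc Q x z) y)"
  using ident by blast

lemma e_car: "e \<in> car Q" by (rule lin_ok.c_un[OF lin_Q])

lemma Q_leib: assumes u: "u\<in>car Q" and v: "v\<in>car Q"
  shows "cc Q e (dt Q u v) = pl Q (dt Q (cc Q e u) v) (dt Q u (cc Q e v))"
  using Q_ident[OF e_car u v] Q_comm[OF lin_ok.c_cc[OF lin_Q e_car v] u] by simp

lemma Q_ee: "cc Q e e = zr Q"
proof -
  let ?c = "cc Q e e"
  have c: "?c \<in> car Q" by (rule lin_ok.c_cc[OF lin_Q e_car e_car])
  have ee: "dt Q e e = e" by (rule Q_unit[OF e_car])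
  have "?c = pl Q ?c ?c" using Q_ident[OF e_car e_car e_car] ee Q_unit_r[OF c] by simp
  hence "sub Q ?c ?c = ?c" using lin_ok.e_plsub[OF lin_Q c c] by simp
  thus ?thesis using lin_ok.e_refl[OF lin_Q c] by simp
qed

definition psi0 where "psi0 = pp S \<circ> Fh"

lemma psi0_pres: "pres dmag Q psi0"
  unfolding pres_def psi0_def using pp(1)[of S]
  by (auto simp: presD Fh_car Fh_zr Fh_un Fh_pl Fh_dt Fh_sm lin_ok.c_un[OF lin_dmag])

lemma psi0_dr: "pres_dr dmag (cc Q e) psi0"
  unfolding pres_dr_def psi0_def using pp(1,2)[of S]
  by (auto simp: presD pres_cc_def Fh_dr Fh_car lin_ok.c_un[OF lin_bimag])

lemma psi0_car: "g \<in> car dmag \<Longrightarrow> psi0 g \<in> car Q" using presD(1)[OF psi0_pres] .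

lemma psi0_sub0: assumes X: "X\<in>car dmag" and Y: "Y\<in>car dmag" and eq: "psi0 X = psi0 Y"
  shows "psi0 (sub dmag X Y) = zr Q"
  using pres_sub[OF psi0_pres lin_dmag X Y] eq lin_ok.e_refl[OF lin_Q psi0_car[OF Y]] by simp

lemma psi0_kill: assumes s: "s \<in> diff_rels dmag" shows "psi0 s = zr Q"
proof -
  obtain u v w where u: "u\<in>car dmag" and v: "v\<in>car dmag" and w: "w\<in>car dmag" and
    s: "s \<in> {sub dmag (dt dmag u v) (dt dmag v u),
       sub dmag (dt dmag (dt dmag u v) w) (dt dmag u (dt dmag v w)),
       sub dmag (dt dmag (un dmag) u) u,
       sub dmag (dr dmag (dt dmag u v)) (pl dmag (dt dmag (dr dmag u) v) (dt dmag u (dr dmag v))),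
       dr dmag (un dmag)}"
    using s unfolding diff_rels_def by blast
  note L = lin_ok.c_dt[OF lin_dmag] lin_ok.c_dr[OF lin_dmag] lin_ok.c_pl[OF lin_dmag] lin_ok.c_un[OF lin_dmag]
  note P = presD[OF psi0_pres]
  note PD = psi0_dr[unfolded pres_dr_def, rule_format]
  note C = psi0_car
  have dtc: "dt dmag a b \<in> car dmag" if "a\<in>car dmag" "b\<in>car dmag" for a b using L(1) that .
  have drc: "dr dmag a \<in> car dmag" if "a\<in>car dmag" for a using L(2) that .
  show ?thesis using s
  proof (elim insertE emptyE)
    assume "s = sub dmag (dt dmag u v) (dt dmag v u)"
    moreover have "psi0 (dt dmag u v) = psi0 (dt dmag v u)" using Q_comm[OF C[OF u] C[OF v]] by (simp add: P(5) u v)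
    ultimately show ?thesis using psi0_sub0[OF dtc[OF u v] dtc[OF v u]] by simp
  next
    assume "s = sub dmag (dt dmag (dt dmag u v) w) (dt dmag u (dt dmag v w))"
    moreover have "psi0 (dt dmag (dt dmag u v) w) = psi0 (dt dmag u (dt dmag v w))"
      using Q_assoc[OF C[OF u] C[OF v] C[OF w]] by (simp add: P(5) u v w dtc)
    ultimately show ?thesis using psi0_sub0[OF dtc[OF dtc[OF u v] w] dtc[OF u dtc[OF v w]]] by simp
  next
    assume "s = sub dmag (dt dmag (un dmag) u) u"
    moreover have "psi0 (dt dmag (un dmag) u) = psi0 u" using Q_unit[OF C[OF u]] by (simp add: P(5,3) u L(4))
    ultimately show ?thesis using psi0_sub0[OF dtc[OF L(4) u] u] by simp
  next
    assume "s = sub dmag (dr dmag (dt dmag u v)) (pl dmag (dt dmag (dr dmag u) v) (dt dmag u (dr dmag v)))"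
    moreover have "psi0 (dr dmag (dt dmag u v)) = psi0 (pl dmag (dt dmag (dr dmag u) v) (dt dmag u (dr dmag v)))"
      using Q_leib[OF C[OF u] C[OF v]] by (simp add: P(5,4) PD u v dtc drc)
    ultimately show ?thesis
      using psi0_sub0[OF drc[OF dtc[OF u v]] L(3)[OF dtc[OF drc[OF u] v] dtc[OF u drc[OF v]]]] by simp
  next
    assume "s = dr dmag (un dmag)"
    thus ?thesis using Q_ee by (simp add: L PD P)
  qed
qed

lemma DZ: "cc Q e (zr Q) = zr Q" by (rule lin_ok.e_ccz1[OF lin_Q e_car])

lemma psi0_killJ: "a \<in> J0 \<Longrightarrow> psi0 a = zr Q"
  by (rule diff_kill[OF lin_dmag lin_Q psi0_pres psi0_dr DZ psi0_kill])

definition psik where "psik = ind psi0"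

lemma psik: "pres kX Q psik" "pres_dr kX (cc Q e) psik" "g \<in> car dmag \<Longrightarrow> psik (\<pi>k g) = psi0 g"
proof -
  show "pres kX Q psik" unfolding psik_def kX_q by (rule ind_pres[OF lin_dmag J0_ok lin_Q psi0_pres psi0_killJ])
  show "pres_dr kX (cc Q e) psik" unfolding psik_def kX_q
    by (rule ind_pres_dr[OF lin_dmag J0_ok lin_Q psi0_pres psi0_killJ psi0_dr])
  show "g \<in> car dmag \<Longrightarrow> psik (\<pi>k g) = psi0 g" unfolding psik_def
    by (rule ind_cos[OF lin_dmag J0_ok lin_Q psi0_pres psi0_killJ])
qed

lemma psik_cc: "pres_cc kX Q psik"
  unfolding pres_cc_def
proof (intro ballI)
  fix U V :: "('x dterm \<Rightarrow> 'k) set" assume U: "U \<in> car kX" and V: "V \<in> car kX"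
  have dV: "dr kX V \<in> car kX" by (rule lin_ok.c_dr[OF lin_kX V])
  have "psik (cc kX U V) = psik (dt kX U (dr kX V))" by (simp add: cc_kX U V)
  also have "\<dots> = dt Q (psik U) (cc Q e (psik V))"
    using presD(5)[OF psik(1) U dV] psik(2) V unfolding pres_dr_def by simp
  also have "\<dots> = cc Q (psik U) (psik V)"
    using Q_cc[OF presD(1)[OF psik(1) U] presD(1)[OF psik(1) V]] by simp
  finally show "psik (cc kX U V) = cc Q (psik U) (psik V)" .
qed

lemma psik_TT: "f \<in> car bimag \<Longrightarrow> psik (TT f) = pp S f"
proof -
  assume f: "f \<in> car bimag"
  have "(psik \<circ> TT) f = pp S f"
  proof (rule uniq_bimag[OF pres_comp[OF TT(1) psik(1)] pp(1) pres_cc_comp[OF TT(1) TT(2) psik_cc] pp(2) _ f])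
    fix x
    have "Fh (dl (DV x)) = (dl (BV x) :: 'x bterm \<Rightarrow> 'k)" by (simp add: Fh_dl)
    thus "(psik \<circ> TT) (dl (BV x)) = pp S (dl (BV x))"
      by (simp add: TT_gen psik(3) dl_d psi0_def)
  qed
  thus ?thesis by simp
qed

abbreviation "RR \<equiv> \<theta> ` dproj ` S"
abbreviation "KK \<equiv> kXR (\<theta> ` dproj ` S)"

lemma S_pi1: "s \<in> S \<Longrightarrow> \<exists>f\<in>car bimag. s = \<pi>1 f" using S_sub pi1(4) by blast

lemma TT_eq: "f \<in> car bimag \<Longrightarrow> TT f = \<theta> (dproj (\<pi>1 f))" by (simp add: TT_def)

lemma psik_killR: assumes r: "r \<in> RR" shows "psik r = zr Q"
proof -
  obtain s where s: "s \<in> S" "r = \<theta> (dproj s)" using r by blast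
  obtain f where f: "f \<in> car bimag" "s = \<pi>1 f" using S_pi1[OF s(1)] by blast
  have "psik r = pp S f" using psik_TT[OF f(1)] TT_eq[OF f(1)] s f by simp
  also have "\<dots> = \<pi>2 S s" by (simp add: pp_def f)
  also have "\<dots> = zr Q"
  proof -
    have sc: "s \<in> car GDNP" using S_sub s(1) by blast
    have "s \<in> I2 S" by (rule gdnp_ideal.gen[OF s(1) sc])
    thus ?thesis unfolding Q_q using cos_zr[OF lin_GDNP GDNP_ideal_ok sc] by simp
  qed
  finally show ?thesis .
qed

lemma psik_killJ: "a \<in> J1 RR \<Longrightarrow> psik a = zr Q"
  by (rule diff_kill[OF lin_kX lin_Q psik(1) psik(2) DZ psik_killR])

definition psiK where "psiK = ind psik"

lemma psiK: "pres KK Q psiK" "V \<in> car kX \<Longrightarrow> psiK (\<pi>K RR V) = psik V"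
proof -
  show "pres KK Q psiK" unfolding psiK_def K_q by (rule ind_pres[OF lin_kX kX_ideal_ok lin_Q psik(1) psik_killJ])
  show "V \<in> car kX \<Longrightarrow> psiK (\<pi>K RR V) = psik V" unfolding psiK_def
    by (rule ind_cos[OF lin_kX kX_ideal_ok lin_Q psik(1) psik_killJ])
qed

definition phi1 where "phi1 = \<pi>K RR \<circ> \<theta> \<circ> dproj"

lemma phi1: "pres GDNP KK phi1" "pres_cc GDNP KK phi1"
proof -
  have p: "pres GDNP kX (\<theta> \<circ> dproj)" by (rule pres_comp[OF pid(1) th_pres])
  have c: "pres_cc GDNP kX (\<theta> \<circ> dproj)" by (rule pres_cc_comp[OF pid(1) pid(2) th_cc])
  show "pres GDNP KK phi1" unfolding phi1_def using pres_comp[OF p piK(1)] by (simp add: comp_assoc)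
  show "pres_cc GDNP KK phi1" unfolding phi1_def using pres_cc_comp[OF p c piK(2)] by (simp add: comp_assoc)
qed

lemma phi1_killS: assumes s: "s \<in> S" shows "phi1 s = zr KK"
proof -
  have sc: "s \<in> car GDNP" using s S_sub by blast
  have "\<theta> (dproj s) \<in> car kX" using presD(1)[OF th_pres presD(1)[OF pid(1) sc]] .
  moreover have "\<theta> (dproj s) \<in> RR" using s by blast
  ultimately have "\<theta> (dproj s) \<in> J1 RR" by (rule diff_ideal.gen[rotated])
  thus ?thesis unfolding phi1_def K_q
    using cos_zr[OF lin_kX kX_ideal_ok \<open>\<theta> (dproj s) \<in> car kX\<close>] by simp
qed

lemma phi1_kill: assumes a: "a \<in> I2 S" shows "phi1 a = zr KK"
proof (rule gdnp_kill[OF lin_GDNP lin_K phi1(1) phi1(2) _ a])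
  fix s assume "s \<in> S" thus "phi1 s = zr KK" by (rule phi1_killS)
qed

definition phi where "phi = ind phi1"

lemma phi: "pres Q KK phi" "pres_cc Q KK phi" "U \<in> car GDNP \<Longrightarrow> phi (\<pi>2 S U) = phi1 U"
proof -
  show "pres Q KK phi" unfolding phi_def Q_q by (rule ind_pres[OF lin_GDNP GDNP_ideal_ok lin_K phi1(1) phi1_kill])
  show "pres_cc Q KK phi" unfolding phi_def Q_q
    by (rule ind_pres_cc[OF lin_GDNP GDNP_ideal_ok lin_K phi1(1) phi1_kill phi1(2)])
  show "U \<in> car GDNP \<Longrightarrow> phi (\<pi>2 S U) = phi1 U" unfolding phi_def
    by (rule ind_cos[OF lin_GDNP GDNP_ideal_ok lin_K phi1(1) phi1_kill])
qed

lemma phi_pp: assumes f: "f \<in> car bimag" shows "phi (pp S f) = \<pi>K RR (TT f)"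
proof -
  have "\<pi>1 f \<in> car GDNP" by (rule presD(1)[OF pi1(1) f])
  from phi(3)[OF this] show ?thesis by (simp add: pp_def phi1_def TT_def)
qed

lemma K_cc: assumes a: "a \<in> car KK" and b: "b \<in> car KK" shows "cc KK a b = dt KK a (dr KK b)"
proof -
  obtain g where g: "g \<in> car dmag" "a = qq RR g" using ex_qq[OF a] by blast
  obtain h where h: "h \<in> car dmag" "b = qq RR h" using ex_qq[OF b] by blast
  have dh: "dr dmag h \<in> car dmag" by (rule lin_ok.c_dr[OF lin_dmag h(1)])
  have "cc KK a b = qq RR (cc dmag g h)" using g h by (simp add: qq(2)[unfolded pres_cc_def, rule_format])
  also have "\<dots> = qq RR (dt dmag g (dr dmag h))" by (simp add: cc_dmag)
  also have "\<dots> = dt KK (qq RR g) (qq RR (dr dmag h))" by (rule presD(5)[OF qq(1) g(1) dh])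
  also have "\<dots> = dt KK a (dr KK b)" using g h by (simp add: qq(3)[unfolded pres_dr_def, rule_format])
  finally show ?thesis .
qed

lemma K_unit: assumes a: "a \<in> car KK" shows "dt KK (un KK) a = a"
proof -
  obtain g where g: "g \<in> car dmag" "a = qq RR g" using ex_qq[OF a] by blast
  have "dt KK (un KK) a = qq RR (dt dmag (un dmag) g)"
    using g by (simp add: presD(5)[OF qq(1) lin_ok.c_un[OF lin_dmag] g(1)] presD(3)[OF qq(1)])
  also have "\<dots> = qq RR g" by (simp add: qq_def rd_unit[OF g(1)])
  finally show ?thesis using g by simp
qed

lemma phi_car: "Z \<in> car Q \<Longrightarrow> phi Z \<in> car KK" by (rule presD(1)[OF phi(1)])

lemma phi_dr: assumes Z: "Z \<in> car Q" shows "phi (cc Q e Z) = dr KK (phi Z)"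
proof -
  have "phi (cc Q e Z) = cc KK (phi e) (phi Z)" using phi(2) e_car Z unfolding pres_cc_def by blast
  also have "\<dots> = cc KK (un KK) (phi Z)" by (simp add: presD(3)[OF phi(1)])
  also have "\<dots> = dt KK (un KK) (dr KK (phi Z))" by (rule K_cc[OF lin_ok.c_un[OF lin_K] phi_car[OF Z]])
  also have "\<dots> = dr KK (phi Z)" by (rule K_unit[OF lin_ok.c_dr[OF lin_K phi_car[OF Z]]])
  finally show ?thesis .
qed

lemma phi_psi0: assumes g: "g \<in> car dmag" shows "phi (psi0 g) = qq RR g"
proof -
  have P: "pres dmag KK (phi \<circ> psi0)" by (rule pres_comp[OF psi0_pres phi(1)])
  have PD: "pres_dr dmag (dr KK) (phi \<circ> psi0)"
    unfolding pres_dr_def using psi0_dr phi_dr psi0_car unfolding pres_dr_def by simp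
  have "(phi \<circ> psi0) g = qq RR g"
  proof (rule uniq_dmag[OF P qq(1) PD qq(3) _ g])
    fix x
    have c: "(dl (BV x) :: 'x bterm \<Rightarrow> 'k) \<in> car bimag" by (rule dl_b(4))
    have "psi0 (dl (DV x)) = pp S (dl (BV x))" by (simp add: psi0_def Fh_dl)
    hence "(phi \<circ> psi0) (dl (DV x)) = \<pi>K RR (TT (dl (BV x)))" using phi_pp[OF c] by simp
    thus "(phi \<circ> psi0) (dl (DV x)) = qq RR (dl (DV x))" by (simp add: TT_gen qq_def)
  qed
  thus ?thesis by simp
qed

lemma main_result:
  "\<exists>\<phi>. bij_betw \<phi> (car Q) (car KK) \<and> gdnp_hom Q KK \<phi> \<and> diff_hom (gdnp_as_diff Q) KK \<phi>"
proof (intro exI conjI)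
  have inv1: "psiK (phi Z) = Z" if Z: "Z \<in> car Q" for Z
  proof -
    obtain f where f: "f \<in> car bimag" "Z = pp S f" using ex_pp[OF Z] by blast
    have "psiK (phi Z) = psiK (\<pi>K RR (TT f))" using phi_pp f by simp
    also have "\<dots> = psik (TT f)" by (rule psiK(2)[OF presD(1)[OF TT(1) f(1)]])
    also have "\<dots> = Z" using psik_TT f by simp
    finally show ?thesis .
  qed
  have inv2: "phi (psiK W) = W" if W: "W \<in> car KK" for W
  proof -
    obtain g where g: "g \<in> car dmag" "W = qq RR g" using ex_qq[OF W] by blast
    have "psiK W = psiK (\<pi>K RR (\<pi>k g))" using g by (simp add: qq_def)
    also have "\<dots> = psik (\<pi>k g)" by (rule psiK(2)[OF presD(1)[OF pik(1) g(1)]])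
    also have "\<dots> = psi0 g" by (rule psik(3)[OF g(1)])
    finally have "phi (psiK W) = phi (psi0 g)" by simp
    also have "\<dots> = W" using phi_psi0 g by simp
    finally show ?thesis .
  qed
  show "bij_betw phi (car Q) (car KK)"
    by (rule bij_betw_byWitness[where f'=psiK]) (use inv1 inv2 phi_car presD(1)[OF psiK(1)] in auto)
  show "gdnp_hom Q KK phi" using phi(1,2) unfolding gdnp_hom_def lin_hom_def pres_def pres_cc_def by auto
  show "diff_hom (gdnp_as_diff Q) KK phi"
    using phi(1) phi_dr unfolding diff_hom_def lin_hom_def pres_def gdnp_as_diff_def by auto
qed

end

theorem mainTheorem7:
  fixes S :: "('x::wellorder bterm \<Rightarrow> 'k::field) set set"
    and \<theta> :: "('x bterm \<Rightarrow> 'k) set set \<Rightarrow> ('x dterm \<Rightarrow> 'k) set"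
  assumes S_sub: "S \<subseteq> car (GDNP :: ('k, ('x bterm \<Rightarrow> 'k) set) alg)"
    and ident: "\<forall>x\<in>car (GDNPq S). \<forall>y\<in>car (GDNPq S). \<forall>z\<in>car (GDNPq S).
        cc (GDNPq S) x (dt (GDNPq S) y z)
          = pl (GDNPq S) (dt (GDNPq S) (cc (GDNPq S) x y) z) (dt (GDNPq S) (cc (GDNPq S) x z) y)"
    and theta_hom: "gdnp_hom DGDNP kX \<theta>"
    and theta_gen: "\<forall>a. \<theta> (dgen a) = kgen a"
  shows "\<exists>\<phi>. bij_betw \<phi> (car (GDNPq S)) (car (kXR (\<theta> ` dproj ` S)))
           \<and> gdnp_hom (GDNPq S) (kXR (\<theta> ` dproj ` S)) \<phi>
           \<and> diff_hom (gdnp_as_diff (GDNPq S)) (kXR (\<theta> ` dproj ` S)) \<phi>"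
  by (rule main_result[OF S_sub ident theta_hom theta_gen])


end
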